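(* Let $m,n\geq 2$. Then: (i) If $\hat g_{\text{inv}}:\mathbb{C}^{m\times n}\to\mathbb{C}^{n\times m}$ is any function with $\sup_{A\in\mathbb{C}^{m\times n},\,\|A\|_F\le\sqrt2}\|A^\dagger-\hat g_{\text{inv}}(A)\|_F<\infty$, then $\hat g_{\text{inv}}$ is not Banach-Mazur computable. (ii) If $\hat g_{\text{norm}}:\mathbb{C}^{m\times n}\to\mathbb{R}$ is any function with $\sup_{A\in\mathbb{C}^{m\times n},\,\|A\|_F\le\sqrt2}\big|\|A^\dagger\|_F-\hat g_{\text{norm}}(A)\big|<\infty$, then $\hat g_{\text{norm}}$ is not Banach-Mazur computable. (iii) If $\hat\Psi_{\text{lsq}}:\mathbb{C}^{m\times n}\times\mathbb{C}^m\to\mathbb{R}$ is any function with $\sup_{(A,b):\,\|A\|_F\le\sqrt2,\ \|b\|_2\le\sqrt2}\big|\min_{x\in\mathbb{C}^n}\|Ax-b\|_2-\hat\Psi_{\text{lsq}}(A,b)\big|<\tfrac14$, then $\hat\Psi_{\text{lsq}}$ is not Banach-Mazur computable. (iv) If $\hat\Psi_{\text{sol}}:\mathbb{C}^{m\times n}\times\mathbb{C}^m\to\mathbb{C}^n$ is any function with $\sup_{(A,b):\,\|A\|_F\le\sqrt2,\ \|b\|_2\le\sqrt2}\|A^\dagger b-\hat\Psi_{\text{sol}}(A,b)\|_2<\infty$, then $\hat\Psi_{\text{sol}}$ is not Banach-Mazur computable. (v) If $\hat\Psi_{\text{norm}}:\mathbb{C}^{m\times n}\times\mathbb{C}^m\to\mathbb{R}$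 is any function with $\sup_{(A,b):\,\|A\|_F\le\sqrt2,\ \|b\|_2\le\sqrt2}\big|\|A^\dagger b\|_2-\hat\Psi_{\text{norm}}(A,b)\big|<\infty$, then $\hat\Psi_{\text{norm}}$ is not Banach-Mazur computable. (vi) If $\hat\kappa:\mathbb{C}^{m\times n}\to\mathbb{R}$ is any function with $\sup_{A\in\mathbb{C}^{m\times n},\,\|A\|_F\le\sqrt2}\big|\|A\|_F\|A^\dagger\|_F-\hat\kappa(A)\big|<\infty$, then $\hat\kappa$ is not Banach-Mazur computable.
   Context: For $A\in\mathbb{C}^{m\times n}$, $A^\dagger\in\mathbb{C}^{n\times m}$ denotes the Moore–Penrose pseudoinverse (the unique matrix with $AA^\dagger A=A$, $A^\dagger AA^\dagger=A^\dagger$, $(AA^\dagger)^H=AA^\dagger$, $(A^\dagger A)^H=A^\dagger A$); $A^\dagger b$ is the minimal-Euclidean-norm minimizer of $\|Ax-b\|_2$. $\|\cdot\|_F$ is the Frobenius norm and $\|\cdot\|_2$ the Euclidean norm. Computability notions: a sequence $(r_k)\subset\mathbb{Q}$ is computable if $r_k=(-1)^{s(k)}a(k)/b(k)$ for recursive $a,b,s:\mathbb{N}\to\mathbb{N}$, $b(k)\ne0$ (analogously for multi-indexed sequences). A real $x$ is computable if there is a computable rational sequence $(r_k)$ with $|r_k-x|\le 2^{-k}$ for all $k$. A real sequence $(x_n)$ is computable if there is a computable rational double sequence $(r_{n,k})$ with $|r_{n,k}-x_n|\le2^{-k}$ for all $n,k$. Complex numbers, vectors, matrices and sequences thereof are computable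 if all real and imaginary parts of all entries are. A function defined on computable inputs is Banach-Mazur computable if it maps every computable sequence of inputs to a computable sequence of outputs (for complex-valued functions: the real and imaginary parts do). *)

theory Defs
  imports "HOL-Analysis.Analysis"
begin

datatype recf = RZero | RSucc | RProj nat | RComp recf "recf list" | RPrim recf recf | RMn recf

inductive eval_rec :: "recf \<Rightarrow> nat list \<Rightarrow> nat \<Rightarrow> bool" where
  ev_zero: "eval_rec RZero xs 0"
| ev_succ: "eval_rec RSucc (x # xs) (Suc x)"
| ev_proj: "i < length xs \<Longrightarrow> eval_rec (RProj i) xs (xs ! i)"
| ev_comp: "list_all2 (\<lambda>g y. eval_rec g xs y) gs ys \<Longrightarrow> eval_rec f ys z \<Longrightarrow> eval_rec (RComp f gs) xs z"
| ev_prim0: "eval_rec f xs y \<Longrightarrow> eval_rec (RPrim f g) (0 # xs) y"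
| ev_primS: "eval_rec (RPrim f g) (n # xs) y \<Longrightarrow> eval_rec g (y # n # xs) z
             \<Longrightarrow> eval_rec (RPrim f g) (Suc n # xs) z"
| ev_mn: "eval_rec f (y # xs) 0 \<Longrightarrow> (\<forall>z<y. \<exists>v. v > 0 \<and> eval_rec f (z # xs) v)
             \<Longrightarrow> eval_rec (RMn f) xs y"

definition recursive1 :: "(nat \<Rightarrow> nat) \<Rightarrow> bool" where
  "recursive1 f \<longleftrightarrow> (\<exists>c. \<forall>x. eval_rec c [x] (f x))"

definition recursive2 :: "(nat \<Rightarrow> nat \<Rightarrow> nat) \<Rightarrow> bool" where
  "recursive2 f \<longleftrightarrow> (\<exists>c. \<forall>x y. eval_rec c [x, y] (f x y))"

definition computable_rat_seq :: "(nat \<Rightarrow> rat) \<Rightarrow> bool" where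
  "computable_rat_seq r \<longleftrightarrow> (\<exists>a b s. recursive1 a \<and> recursive1 b \<and> recursive1 s \<and>
     (\<forall>k. b k \<noteq> 0 \<and> r k = (-1) ^ (s k) * of_nat (a k) / of_nat (b k)))"

definition computable_rat_dseq :: "(nat \<Rightarrow> nat \<Rightarrow> rat) \<Rightarrow> bool" where
  "computable_rat_dseq r \<longleftrightarrow> (\<exists>a b s. recursive2 a \<and> recursive2 b \<and> recursive2 s \<and>
     (\<forall>n k. b n k \<noteq> 0 \<and> r n k = (-1) ^ (s n k) * of_nat (a n k) / of_nat (b n k)))"

definition computable_real :: "real \<Rightarrow> bool" where
  "computable_real x \<longleftrightarrow> (\<exists>r. computable_rat_seq r \<and> (\<forall>k. \<bar>of_rat (r k) - x\<bar> \<le> (1/2) ^ k))"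

definition computable_real_seq :: "(nat \<Rightarrow> real) \<Rightarrow> bool" where
  "computable_real_seq x \<longleftrightarrow>
     (\<exists>r. computable_rat_dseq r \<and> (\<forall>n k. \<bar>of_rat (r n k) - x n\<bar> \<le> (1/2) ^ k))"

definition computable_complex_seq :: "(nat \<Rightarrow> complex) \<Rightarrow> bool" where
  "computable_complex_seq z \<longleftrightarrow>
     computable_real_seq (\<lambda>n. Re (z n)) \<and> computable_real_seq (\<lambda>n. Im (z n))"

definition computable_vec_seq :: "(nat \<Rightarrow> complex ^ 'n) \<Rightarrow> bool" where
  "computable_vec_seq v \<longleftrightarrow> (\<forall>i. computable_complex_seq (\<lambda>k. v k $ i))"

definition computable_mat_seq :: "(nat \<Rightarrow> complex ^ 'n ^ 'm) \<Rightarrow> bool" where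
  "computable_mat_seq A \<longleftrightarrow> (\<forall>i j. computable_complex_seq (\<lambda>k. A k $ i $ j))"

definition BM_computable_mat_mat :: "(complex ^ 'n ^ 'm \<Rightarrow> complex ^ 'p ^ 'q) \<Rightarrow> bool" where
  "BM_computable_mat_mat g \<longleftrightarrow> (\<forall>A. computable_mat_seq A \<longrightarrow> computable_mat_seq (\<lambda>k. g (A k)))"

definition BM_computable_mat_real :: "(complex ^ 'n ^ 'm \<Rightarrow> real) \<Rightarrow> bool" where
  "BM_computable_mat_real g \<longleftrightarrow> (\<forall>A. computable_mat_seq A \<longrightarrow> computable_real_seq (\<lambda>k. g (A k)))"

definition BM_computable_matvec_real :: "(complex ^ 'n ^ 'm \<Rightarrow> complex ^ 'm \<Rightarrow> real) \<Rightarrow> bool" where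
  "BM_computable_matvec_real g \<longleftrightarrow> (\<forall>A b. computable_mat_seq A \<longrightarrow> computable_vec_seq b \<longrightarrow>
      computable_real_seq (\<lambda>k. g (A k) (b k)))"

definition BM_computable_matvec_vec :: "(complex ^ 'n ^ 'm \<Rightarrow> complex ^ 'm \<Rightarrow> complex ^ 'p) \<Rightarrow> bool" where
  "BM_computable_matvec_vec g \<longleftrightarrow> (\<forall>A b. computable_mat_seq A \<longrightarrow> computable_vec_seq b \<longrightarrow>
      computable_vec_seq (\<lambda>k. g (A k) (b k)))"

definition cadjoint :: "complex ^ 'n ^ 'm \<Rightarrow> complex ^ 'm ^ 'n" where
  "cadjoint A = (\<chi> i j. cnj (A $ j $ i))"

definition frob_norm :: "complex ^ 'n ^ 'm \<Rightarrow> real" where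
  "frob_norm A = sqrt (\<Sum>i\<in>UNIV. \<Sum>j\<in>UNIV. (cmod (A $ i $ j))\<^sup>2)"

definition pinv :: "complex ^ 'n ^ 'm \<Rightarrow> complex ^ 'm ^ 'n" where
  "pinv A = (THE X. A ** X ** A = A \<and> X ** A ** X = X \<and>
                    cadjoint (A ** X) = A ** X \<and> cadjoint (X ** A) = X ** A)"

end

theory Submission
  imports Defs "HOL-Library.Nat_Bijection"
begin


definition recfn :: "nat \<Rightarrow> ((nat \<Rightarrow> nat) \<Rightarrow> nat) \<Rightarrow> bool" where
  "recfn n F \<longleftrightarrow> (\<exists>c. \<forall>xs. length xs = n \<longrightarrow> eval_rec c xs (F (nth xs)))"

definition recpred :: "nat \<Rightarrow> ((nat \<Rightarrow> nat) \<Rightarrow> bool) \<Rightarrow> bool" where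
  "recpred n P \<longleftrightarrow> recfn n (\<lambda>e. if P e then 1 else 0)"

fun cconst :: "nat \<Rightarrow> recf" where
  "cconst 0 = RZero"
| "cconst (Suc k) = RComp RSucc [cconst k]"

lemma eval_cconst: "eval_rec (cconst k) xs k"
  by (induction k) (auto intro: eval_rec.intros)

lemma rf_const: "recfn n (\<lambda>e. k)"
  unfolding recfn_def using eval_cconst by blast

lemma rf_proj: "i < n \<Longrightarrow> recfn n (\<lambda>e. e i)"
  unfolding recfn_def by (rule exI[of _ "RProj i"]) (auto intro: eval_rec.intros)

lemma rf_cong: "recfn n F \<Longrightarrow> (\<And>e. F e = G e) \<Longrightarrow> recfn n G"
proof -
  assume "recfn n F" "\<And>e. F e = G e"
  then have "F = G" by auto
  then show ?thesis using \<open>recfn n F\<close> by simp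
qed

lemma rf_comp1:
  assumes "recfn 1 (\<lambda>e. f (e 0))" "recfn n G"
  shows "recfn n (\<lambda>e. f (G e))"
proof -
  obtain cf where cf: "\<And>xs. length xs = 1 \<Longrightarrow> eval_rec cf xs (f (xs ! 0))"
    using assms(1) unfolding recfn_def by blast
  obtain cg where cg: "\<And>xs. length xs = n \<Longrightarrow> eval_rec cg xs (G (nth xs))"
    using assms(2) unfolding recfn_def by blast
  show ?thesis unfolding recfn_def
  proof (intro exI allI impI)
    fix xs :: "nat list" assume "length xs = n"
    then show "eval_rec (RComp cf [cg]) xs (f (G (nth xs)))"
      using cf[of "[G (nth xs)]"] cg by (auto intro!: eval_rec.intros)
  qed
qed

lemma rf_comp2:
  assumes "recfn 2 (\<lambda>e. f (e 0) (e 1))" "recfn n G" "recfn n H"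
  shows "recfn n (\<lambda>e. f (G e) (H e))"
proof -
  obtain cf where cf: "\<And>xs. length xs = 2 \<Longrightarrow> eval_rec cf xs (f (xs ! 0) (xs ! 1))"
    using assms(1) unfolding recfn_def by blast
  obtain cg where cg: "\<And>xs. length xs = n \<Longrightarrow> eval_rec cg xs (G (nth xs))"
    using assms(2) unfolding recfn_def by blast
  obtain ch where ch: "\<And>xs. length xs = n \<Longrightarrow> eval_rec ch xs (H (nth xs))"
    using assms(3) unfolding recfn_def by blast
  show ?thesis unfolding recfn_def
  proof (intro exI allI impI)
    fix xs :: "nat list" assume "length xs = n"
    then show "eval_rec (RComp cf [cg, ch]) xs (f (G (nth xs)) (H (nth xs)))"
      using cf[of "[G (nth xs), H (nth xs)]"] cg ch by (auto intro!: eval_rec.intros)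
  qed
qed

lemma rf_comp3:
  assumes "recfn 3 (\<lambda>e. f (e 0) (e 1) (e 2))" "recfn n G" "recfn n H" "recfn n K"
  shows "recfn n (\<lambda>e. f (G e) (H e) (K e))"
proof -
  obtain cf where cf: "\<And>xs. length xs = 3 \<Longrightarrow> eval_rec cf xs (f (xs ! 0) (xs ! 1) (xs ! 2))"
    using assms(1) unfolding recfn_def by blast
  obtain cg where cg: "\<And>xs. length xs = n \<Longrightarrow> eval_rec cg xs (G (nth xs))"
    using assms(2) unfolding recfn_def by blast
  obtain ch where ch: "\<And>xs. length xs = n \<Longrightarrow> eval_rec ch xs (H (nth xs))"
    using assms(3) unfolding recfn_def by blast
  obtain ck where ck: "\<And>xs. length xs = n \<Longrightarrow> eval_rec ck xs (K (nth xs))"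
    using assms(4) unfolding recfn_def by blast
  show ?thesis unfolding recfn_def
  proof (intro exI allI impI)
    fix xs :: "nat list" assume "length xs = n"
    then show "eval_rec (RComp cf [cg, ch, ck]) xs (f (G (nth xs)) (H (nth xs)) (K (nth xs)))"
      using cf[of "[G (nth xs), H (nth xs), K (nth xs)]"] cg ch ck
      by (auto intro!: eval_rec.intros simp: numeral_3_eq_3)
  qed
qed

lemma list_all2_proj: "list_all2 (\<lambda>g y. eval_rec g xs y) (map RProj [0..<length xs]) xs"
  by (auto simp: list_all2_conv_all_nth intro: eval_rec.intros)

lemma ev_proj_Suc: "i < length ys \<Longrightarrow> eval_rec (RProj (Suc i)) (a # ys) (ys ! i)"
  using ev_proj[of "Suc i" "a # ys"] by simp

lemma list_all2_proj_Suc: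
  assumes "length xs = Suc n"
  shows "list_all2 (\<lambda>g y. eval_rec g xs y) (map (\<lambda>i. RProj (Suc i)) [0..<n]) (tl xs)"
  using assms by (cases xs) (auto simp: list_all2_conv_all_nth intro: ev_proj_Suc)

lemma rf_shift:
  assumes "recfn n H"
  shows "recfn (Suc n) (\<lambda>e. H (\<lambda>j. e (Suc j)))"
proof -
  obtain ch where ch: "\<And>xs. length xs = n \<Longrightarrow> eval_rec ch xs (H (nth xs))"
    using assms unfolding recfn_def by blast
  show ?thesis unfolding recfn_def
  proof (intro exI allI impI)
    fix xs :: "nat list" assume l: "length xs = Suc n"
    then obtain a ys where xs: "xs = a # ys" by (cases xs) auto
    have "eval_rec (RComp ch (map (\<lambda>i. RProj (Suc i)) [0..<n])) xs (H (nth ys))"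
      using list_all2_proj_Suc[OF l] ch[of ys] l xs by (auto intro!: eval_rec.intros)
    moreover have "(\<lambda>j. xs ! Suc j) = nth ys" using xs by auto
    ultimately show "eval_rec (RComp ch (map (\<lambda>i. RProj (Suc i)) [0..<n])) xs (H (\<lambda>j. nth xs (Suc j)))"
      by simp
  qed
qed

lemma rf_prim:
  assumes "recfn n F0" "recfn (Suc (Suc n)) (\<lambda>e. G (e 0) (e 1) (\<lambda>j. e (Suc (Suc j))))" "recfn n B"
  shows "recfn n (\<lambda>e. rec_nat (F0 e) (\<lambda>k acc. G acc k e) (B e))"
proof -
  obtain cf where cf: "\<And>xs. length xs = n \<Longrightarrow> eval_rec cf xs (F0 (nth xs))"
    using assms(1) unfolding recfn_def by blast
  obtain cg where cg: "\<And>xs. length xs = Suc (Suc n) \<Longrightarrow> eval_rec cg xs (G (xs ! 0) (xs ! 1) (\<lambda>j. xs ! Suc (Suc j)))"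
    using assms(2) unfolding recfn_def by blast
  obtain cb where cb: "\<And>xs. length xs = n \<Longrightarrow> eval_rec cb xs (B (nth xs))"
    using assms(3) unfolding recfn_def by blast
  have P: "eval_rec (RPrim cf cg) (x # xs) (rec_nat (F0 (nth xs)) (\<lambda>k acc. G acc k (nth xs)) x)"
    if "length xs = n" for x xs
  proof (induction x)
    case 0
    then show ?case using cf[OF that] by (auto intro: eval_rec.intros)
  next
    case (Suc x)
    have "eval_rec cg (rec_nat (F0 (nth xs)) (\<lambda>k acc. G acc k (nth xs)) x # x # xs)
       (G (rec_nat (F0 (nth xs)) (\<lambda>k acc. G acc k (nth xs)) x) x (nth xs))"
      using cg[of "rec_nat (F0 (nth xs)) (\<lambda>k acc. G acc k (nth xs)) x # x # xs"] that by simp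
    then show ?case using Suc by (auto intro: eval_rec.intros)
  qed
  show ?thesis unfolding recfn_def
  proof (intro exI allI impI)
    fix xs :: "nat list" assume l: "length xs = n"
    have "list_all2 (\<lambda>g y. eval_rec g xs y) (cb # map RProj [0..<n]) (B (nth xs) # xs)"
      using cb[OF l] list_all2_proj[of xs] l by simp
    then show "eval_rec (RComp (RPrim cf cg) (cb # map RProj [0..<n])) xs
        (rec_nat (F0 (nth xs)) (\<lambda>k acc. G acc k (nth xs)) (B (nth xs)))"
      using P[OF l] by (auto intro: eval_rec.intros)
  qed
qed


lemma rf_Suc: "recfn n F \<Longrightarrow> recfn n (\<lambda>e. Suc (F e))"
proof -
  have "recfn 1 (\<lambda>e. Suc (e 0))" unfolding recfn_def
  proof (intro exI allI impI)
    fix xs :: "nat list" assume "length xs = 1"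
    then obtain x where "xs = [x]" by (cases xs) auto
    then show "eval_rec RSucc xs (Suc (xs ! 0))" by (auto intro: eval_rec.intros)
  qed
  then show "recfn n F \<Longrightarrow> recfn n (\<lambda>e. Suc (F e))" by (rule rf_comp1)
qed

lemma rf_primI:
  assumes "recfn n Fz" "recfn (Suc (Suc n)) (\<lambda>e. G (e 0) (e 1) (\<lambda>j. e (Suc (Suc j))))" "recfn n B"
    and "\<And>e. rec_nat (Fz e) (\<lambda>k acc. G acc k e) (B e) = H e"
  shows "recfn n H"
  using rf_cong[OF rf_prim[OF assms(1-3)]] assms(4) by blast

lemma recnat_add: "rec_nat a (\<lambda>k acc. Suc acc) m = m + a" by (induction m) auto
lemma recnat_mult: "rec_nat 0 (\<lambda>k acc. acc + a) m = m * a" by (induction m) auto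
lemma recnat_pred: "rec_nat 0 (\<lambda>k acc. k) m = m - 1" by (induction m) auto
lemma recnat_sub: "rec_nat a (\<lambda>k acc. acc - 1) m = a - m" by (induction m) auto
lemma recnat_sg: "rec_nat 0 (\<lambda>k acc. 1) m = (if m = 0 then 0 else 1)" by (induction m) auto
lemma recnat_pow: "rec_nat 1 (\<lambda>k acc. acc * a) m = (a::nat) ^ m" by (induction m) (auto simp: algebra_simps)
lemma recnat_sum: "rec_nat 0 (\<lambda>k acc. acc + F k) m = (\<Sum>i<m. F i)" by (induction m) auto

lemma rf_add: "recfn n F \<Longrightarrow> recfn n G \<Longrightarrow> recfn n (\<lambda>e. F e + G e)"
proof -
  have "recfn 2 (\<lambda>e. e 0 + e 1)"
  proof (rule rf_primI[where G="\<lambda>acc k e. Suc acc" and Fz="\<lambda>e. e 1" and B="\<lambda>e. e 0"])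
    show "recfn (Suc (Suc 2)) (\<lambda>e. Suc (e 0))" by (rule rf_Suc, rule rf_proj) simp
  qed (auto intro: rf_proj simp only: recnat_add)
  then show "recfn n F \<Longrightarrow> recfn n G \<Longrightarrow> recfn n (\<lambda>e. F e + G e)" by (rule rf_comp2)
qed

lemma rf_mult: "recfn n F \<Longrightarrow> recfn n G \<Longrightarrow> recfn n (\<lambda>e. F e * G e)"
proof -
  have "recfn 2 (\<lambda>e. e 0 * e 1)"
  proof (rule rf_primI[where G="\<lambda>acc k e. acc + e 1" and Fz="\<lambda>e. 0" and B="\<lambda>e. e 0"])
    show "recfn (Suc (Suc 2)) (\<lambda>e. e 0 + e (Suc (Suc 1)))" by (rule rf_add; rule rf_proj; simp)
  qed (auto intro: rf_proj rf_const simp only: recnat_mult)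
  then show "recfn n F \<Longrightarrow> recfn n G \<Longrightarrow> recfn n (\<lambda>e. F e * G e)" by (rule rf_comp2)
qed

lemma rf_pred: "recfn n F \<Longrightarrow> recfn n (\<lambda>e. F e - 1)"
proof -
  have "recfn 1 (\<lambda>e. e 0 - 1)"
  proof (rule rf_primI[where G="\<lambda>acc k e. k" and Fz="\<lambda>e. 0" and B="\<lambda>e. e 0"])
    show "recfn (Suc (Suc 1)) (\<lambda>e. e 1)" by (rule rf_proj) simp
  qed (auto intro: rf_proj rf_const simp only: recnat_pred)
  then show "recfn n F \<Longrightarrow> recfn n (\<lambda>e. F e - 1)" by (rule rf_comp1)
qed

lemma rf_sub: "recfn n F \<Longrightarrow> recfn n G \<Longrightarrow> recfn n (\<lambda>e. F e - G e)"
proof -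
  have "recfn 2 (\<lambda>e. e 0 - e 1)"
  proof (rule rf_primI[where G="\<lambda>acc k e. acc - 1" and Fz="\<lambda>e. e 0" and B="\<lambda>e. e 1"])
    show "recfn (Suc (Suc 2)) (\<lambda>e. e 0 - 1)" by (rule rf_pred, rule rf_proj) simp
  qed (auto intro: rf_proj simp only: recnat_sub)
  then show "recfn n F \<Longrightarrow> recfn n G \<Longrightarrow> recfn n (\<lambda>e. F e - G e)" by (rule rf_comp2)
qed

lemma rf_pow: "recfn n F \<Longrightarrow> recfn n G \<Longrightarrow> recfn n (\<lambda>e. F e ^ G e)"
proof -
  have "recfn 2 (\<lambda>e. e 0 ^ e 1)"
  proof (rule rf_primI[where G="\<lambda>acc k e. acc * e 0" and Fz="\<lambda>e. 1" and B="\<lambda>e. e 1"])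
    show "recfn (Suc (Suc 2)) (\<lambda>e. e 0 * e (Suc (Suc 0)))" by (rule rf_mult; rule rf_proj; simp)
  qed (auto intro: rf_proj rf_const simp only: recnat_pow)
  then show "recfn n F \<Longrightarrow> recfn n G \<Longrightarrow> recfn n (\<lambda>e. F e ^ G e)" by (rule rf_comp2)
qed

lemma rf_sg: "recfn n F \<Longrightarrow> recfn n (\<lambda>e. if F e = 0 then 0 else 1)"
proof -
  have "recfn 1 (\<lambda>e. if e 0 = 0 then 0 else 1)"
  proof (rule rf_primI[where G="\<lambda>acc k e. 1" and Fz="\<lambda>e. 0" and B="\<lambda>e. e 0"])
    show "recfn (Suc (Suc 1)) (\<lambda>e. 1)" by (rule rf_const)
  qed (auto intro: rf_proj rf_const simp only: recnat_sg)
  then show "recfn n F \<Longrightarrow> recfn n (\<lambda>e. if F e = 0 then 0 else 1)" by (rule rf_comp1)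
qed

lemma rp_cong: "recpred n P \<Longrightarrow> (\<And>e. P e = Q e) \<Longrightarrow> recpred n Q"
  unfolding recpred_def by (erule rf_cong) auto

lemma rp_eq: assumes "recfn n F" "recfn n G" shows "recpred n (\<lambda>e. F e = G e)"
proof -
  have "recfn n (\<lambda>e. 1 - (if (F e - G e) + (G e - F e) = 0 then 0 else 1))"
    by (intro rf_sub rf_const rf_sg rf_add assms)
  then show ?thesis unfolding recpred_def by (rule rf_cong) auto
qed

lemma rp_less: assumes "recfn n F" "recfn n G" shows "recpred n (\<lambda>e. F e < G e)"
proof -
  have "recfn n (\<lambda>e. (if G e - F e = 0 then 0 else 1))"
    by (intro rf_sub rf_const rf_sg assms)
  then show ?thesis unfolding recpred_def by (rule rf_cong) auto
qed

lemma rp_le: assumes "recfn n F" "recfn n G" shows "recpred n (\<lambda>e. F e \<le> G e)"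
proof -
  have "recfn n (\<lambda>e. 1 - (if F e - G e = 0 then 0 else 1))"
    by (intro rf_sub rf_const rf_sg assms)
  then show ?thesis unfolding recpred_def by (rule rf_cong) auto
qed

lemma rp_not: assumes "recpred n P" shows "recpred n (\<lambda>e. \<not> P e)"
proof -
  have "recfn n (\<lambda>e. 1 - (if P e then 1 else 0))"
    using assms unfolding recpred_def by (intro rf_sub rf_const)
  then show ?thesis unfolding recpred_def by (rule rf_cong) auto
qed

lemma rp_conj: assumes "recpred n P" "recpred n Q" shows "recpred n (\<lambda>e. P e \<and> Q e)"
proof -
  have "recfn n (\<lambda>e. (if P e then 1 else 0) * (if Q e then 1 else 0))"
    using assms unfolding recpred_def by (intro rf_mult)
  then show ?thesis unfolding recpred_def by (rule rf_cong) auto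
qed

lemma rp_disj: assumes "recpred n P" "recpred n Q" shows "recpred n (\<lambda>e. P e \<or> Q e)"
proof -
  have "recfn n (\<lambda>e. if (if P e then 1 else 0) + (if Q e then 1 else 0) = (0::nat) then 0 else 1)"
    using assms unfolding recpred_def by (rule rf_sg[OF rf_add])
  then show ?thesis unfolding recpred_def by (rule rf_cong) auto
qed

lemma rp_imp: "recpred n P \<Longrightarrow> recpred n Q \<Longrightarrow> recpred n (\<lambda>e. P e \<longrightarrow> Q e)"
  using rp_disj[OF rp_not] by (simp only: imp_conv_disj)

lemma rp_const: "recpred n (\<lambda>e. b)"
  unfolding recpred_def by (rule rf_const)

lemma rf_if: assumes "recpred n P" "recfn n F" "recfn n G"
  shows "recfn n (\<lambda>e. if P e then F e else G e)"
proof -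
  have "recfn n (\<lambda>e. (if P e then 1 else 0) * F e + (1 - (if P e then 1 else 0)) * G e)"
    using assms unfolding recpred_def by (intro rf_add rf_mult rf_sub rf_const)
  then show ?thesis by (rule rf_cong) auto
qed

lemma rf_sum:
  assumes "recfn (Suc n) (\<lambda>e. F (e 0) (\<lambda>j. e (Suc j)))" "recfn n B"
  shows "recfn n (\<lambda>e. \<Sum>i<B e. F i e)"
proof (rule rf_primI[where G="\<lambda>acc k e. acc + F k e" and Fz="\<lambda>e. 0" and B=B])
  show "recfn (Suc (Suc n)) (\<lambda>e. e 0 + F (e 1) (\<lambda>j. e (Suc (Suc j))))"
    using rf_add[OF rf_proj rf_shift[OF assms(1)], of 0] by simp
qed (auto intro: rf_const assms(2) simp: recnat_sum)

lemma rp_ex: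
  assumes "recpred (Suc n) (\<lambda>e. P (e 0) (\<lambda>j. e (Suc j)))" "recfn n B"
  shows "recpred n (\<lambda>e. \<exists>i<B e. P i e)"
proof -
  have "recfn n (\<lambda>e. \<Sum>i<B e. (if P i e then 1 else 0))"
    using rf_sum[of n "\<lambda>i e. if P i e then 1 else 0", OF _ assms(2)] assms(1)
    unfolding recpred_def by simp
  then have "recpred n (\<lambda>e. (\<Sum>i<B e. (if P i e then 1 else 0)) \<noteq> (0::nat))"
    by (intro rp_not rp_eq rf_const)
  then show ?thesis by (rule rp_cong) auto
qed

lemma rp_all:
  assumes "recpred (Suc n) (\<lambda>e. P (e 0) (\<lambda>j. e (Suc j)))" "recfn n B"
  shows "recpred n (\<lambda>e. \<forall>i<B e. P i e)"
proof -
  have "recpred n (\<lambda>e. \<not> (\<exists>i<B e. \<not> P i e))"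
    by (intro rp_not rp_ex[OF rp_not[OF assms(1)]] assms(2))
  then show ?thesis by simp
qed


lemmas rf_rules = rf_const rf_proj rf_Suc rf_add rf_mult rf_sub rf_pow rf_sg rf_if rf_sum
  rp_eq rp_less rp_le rp_not rp_conj rp_disj rp_imp rp_const rp_ex rp_all

definition pe :: "nat \<Rightarrow> nat \<Rightarrow> nat" where "pe a b = prod_encode (a, b)"
definition p1 :: "nat \<Rightarrow> nat" where "p1 n = fst (prod_decode n)"
definition p2 :: "nat \<Rightarrow> nat" where "p2 n = snd (prod_decode n)"

lemma p1_pe[simp]: "p1 (pe a b) = a" and p2_pe[simp]: "p2 (pe a b) = b"
  by (simp_all add: p1_def p2_def pe_def)
lemma pe_p[simp]: "pe (p1 n) (p2 n) = n"
  by (simp add: p1_def p2_def pe_def)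
lemma pe_eq[simp]: "pe a b = pe c d \<longleftrightarrow> a = c \<and> b = d"
  by (simp add: pe_def)
lemma pe_ge1: "a \<le> pe a b" and pe_ge2: "b \<le> pe a b"
  by (simp_all add: pe_def le_prod_encode_1 le_prod_encode_2)
lemma p1_le: "p1 n \<le> n" and p2_le: "p2 n \<le> n"
  using pe_ge1[where a="p1 n" and b="p2 n"] pe_ge2[where a="p1 n" and b="p2 n"] by simp_all

lemma recnat_tri: "rec_nat 0 (\<lambda>k acc. acc + Suc k) m = triangle m" by (induction m) auto

lemma rf_pe: "recfn n F \<Longrightarrow> recfn n G \<Longrightarrow> recfn n (\<lambda>e. pe (F e) (G e))"
proof -
  have t: "recfn 1 (\<lambda>e. triangle (e 0))"
  proof (rule rf_primI[where G="\<lambda>acc k e. acc + Suc k" and Fz="\<lambda>e. 0" and B="\<lambda>e. e 0"])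
    show "recfn (Suc (Suc 1)) (\<lambda>e. e 0 + Suc (e 1))" by (intro rf_rules) simp_all
  qed (auto intro: rf_proj rf_const simp only: recnat_tri)
  have "recfn 2 (\<lambda>e. triangle (e 0 + e 1) + e 0)"
    by (intro rf_add rf_comp1[OF t] rf_proj) simp_all
  then have "recfn 2 (\<lambda>e. pe (e 0) (e 1))"
    by (rule rf_cong) (simp add: pe_def prod_encode_def)
  then show "recfn n F \<Longrightarrow> recfn n G \<Longrightarrow> recfn n (\<lambda>e. pe (F e) (G e))" by (rule rf_comp2)
qed

lemma p1_sum: "p1 n = (\<Sum>x<Suc n. if (\<exists>y<Suc n. pe x y = n) then x else 0)"
proof -
  have "(\<exists>y<Suc n. pe x y = n) \<longleftrightarrow> x = p1 n" for x
  proof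
    assume "\<exists>y<Suc n. pe x y = n" then show "x = p1 n" by auto
  next
    assume "x = p1 n" then show "\<exists>y<Suc n. pe x y = n"
      using p2_le[of n] by (intro exI[of _ "p2 n"]) auto
  qed
  then have "(\<Sum>x<Suc n. if (\<exists>y<Suc n. pe x y = n) then x else 0) = (\<Sum>x<Suc n. if x = p1 n then x else 0)"
    by simp
  also have "\<dots> = p1 n" using p1_le[of n] by (simp add: sum.delta')
  finally show ?thesis by simp
qed

lemma p2_sum: "p2 n = (\<Sum>y<Suc n. if (\<exists>x<Suc n. pe x y = n) then y else 0)"
proof -
  have "(\<exists>x<Suc n. pe x y = n) \<longleftrightarrow> y = p2 n" for y
  proof
    assume "\<exists>x<Suc n. pe x y = n" then show "y = p2 n" by auto
  next
    assume "y = p2 n" then show "\<exists>x<Suc n. pe x y = n"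
      using p1_le[of n] by (intro exI[of _ "p1 n"]) auto
  qed
  then have "(\<Sum>y<Suc n. if (\<exists>x<Suc n. pe x y = n) then y else 0) = (\<Sum>y<Suc n. if y = p2 n then y else 0)"
    by simp
  also have "\<dots> = p2 n" using p2_le[of n] by (simp add: sum.delta')
  finally show ?thesis by simp
qed

lemma rf_p1: "recfn n F \<Longrightarrow> recfn n (\<lambda>e. p1 (F e))"
proof -
  have "recfn 1 (\<lambda>e. \<Sum>x<Suc (e 0). if (\<exists>y<Suc (e 0). pe x y = e 0) then x else 0)"
    by (intro rf_rules rf_pe) simp_all
  then have "recfn 1 (\<lambda>e. p1 (e 0))" by (rule rf_cong) (rule p1_sum[symmetric])
  then show "recfn n F \<Longrightarrow> recfn n (\<lambda>e. p1 (F e))" by (rule rf_comp1)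
qed

lemma p1_sum': "p1 n = (\<Sum>x<Suc n. if (\<exists>y<Suc n. pe x y = n) then x else 0)" by (rule p1_sum)

lemma rf_p2: "recfn n F \<Longrightarrow> recfn n (\<lambda>e. p2 (F e))"
proof -
  have "recfn 1 (\<lambda>e. \<Sum>y<Suc (e 0). if (\<exists>x<Suc (e 0). pe x y = e 0) then y else 0)"
    by (intro rf_rules rf_pe) simp_all
  then have "recfn 1 (\<lambda>e. p2 (e 0))" by (rule rf_cong) (rule p2_sum[symmetric])
  then show "recfn n F \<Longrightarrow> recfn n (\<lambda>e. p2 (F e))" by (rule rf_comp1)
qed

lemma rp_comp2: "recpred 2 (\<lambda>e. P (e 0) (e 1)) \<Longrightarrow> recfn n F \<Longrightarrow> recfn n G \<Longrightarrow> recpred n (\<lambda>e. P (F e) (G e))"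
  unfolding recpred_def by (rule rf_comp2[where f="\<lambda>a b. if P a b then 1 else 0"])

definition lcons :: "nat \<Rightarrow> nat \<Rightarrow> nat" where "lcons x L = Suc (pe x L)"
definition ltl :: "nat \<Rightarrow> nat" where "ltl L = p2 (L - 1)"
definition lhd :: "nat \<Rightarrow> nat" where "lhd L = p1 (L - 1)"
definition ltls :: "nat \<Rightarrow> nat \<Rightarrow> nat" where "ltls i L = (ltl ^^ i) L"
definition lnth :: "nat \<Rightarrow> nat \<Rightarrow> nat" where "lnth L i = lhd (ltls i L)"
definition llen :: "nat \<Rightarrow> nat" where "llen L = (\<Sum>i<L. if ltls i L = 0 then 0 else 1)"
definition mem :: "nat \<Rightarrow> nat \<Rightarrow> bool" where "mem J S \<longleftrightarrow> J \<in> set_decode S"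

lemma enc_Cons: "list_encode (x # xs) = lcons x (list_encode xs)"
  by (simp add: lcons_def pe_def)
lemma lhd_lcons[simp]: "lhd (lcons x L) = x" and ltl_lcons[simp]: "ltl (lcons x L) = L"
  by (simp_all add: lhd_def ltl_def lcons_def)
lemma lhd_Suc_pe[simp]: "lhd (Suc (prod_encode (a, b))) = a" and ltl_Suc_pe[simp]: "ltl (Suc (prod_encode (a, b))) = b"
  by (simp_all add: lhd_def ltl_def pe_def[symmetric])
lemma lcons_nz[simp]: "lcons x L \<noteq> 0" by (simp add: lcons_def)
lemma ltl_0[simp]: "ltl 0 = 0" using p2_le[of 0] by (simp add: ltl_def)
lemma enc_0_iff: "list_encode xs = 0 \<longleftrightarrow> xs = []" by (cases xs) auto
lemma ltl_enc: "ltl (list_encode ys) = list_encode (tl ys)"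
  by (cases ys) (auto simp: enc_Cons)
lemma ltls_enc: "ltls i (list_encode xs) = list_encode (drop i xs)"
  by (induction i) (auto simp: ltls_def ltl_enc drop_Suc tl_drop)
lemma lnth_enc: "i < length xs \<Longrightarrow> lnth (list_encode xs) i = xs ! i"
  by (simp add: lnth_def ltls_enc Cons_nth_drop_Suc[symmetric] enc_Cons)
lemma len_le_enc: "length xs \<le> list_encode xs"
  by (induction xs) (auto intro: order.trans[OF _ le_prod_encode_2])
lemma llen_enc: "llen (list_encode xs) = length xs"
proof -
  have "llen (list_encode xs) = (\<Sum>i<list_encode xs. if i < length xs then 1 else 0)"
    unfolding llen_def ltls_enc enc_0_iff by (intro sum.cong) auto
  also have "\<dots> = card {i \<in> {..<list_encode xs}. i < length xs}"
    by (simp add: sum.inter_filter[symmetric])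
  also have "{i \<in> {..<list_encode xs}. i < length xs} = {..<length xs}"
    using len_le_enc[of xs] by auto
  finally show ?thesis by simp
qed
lemma enc_lhd_ltl: "L \<noteq> 0 \<Longrightarrow> lcons (lhd L) (ltl L) = L"
  by (simp add: lcons_def lhd_def ltl_def)

lemma mem_iff: "mem J S \<longleftrightarrow> (\<exists>q<Suc S. \<exists>r<2^J. S = (2*q+1)*2^J + r)"
proof
  assume "mem J S"
  then have o: "odd (S div 2^J)" by (simp add: mem_def set_decode_def)
  define q where "q = S div 2^J div 2"
  have "S div 2^J = 2*q+1" using o unfolding q_def by (simp add: odd_two_times_div_two_succ)
  moreover have "S = (S div 2^J) * 2^J + S mod 2^J" by (rule div_mult_mod_eq[symmetric])
  ultimately have "S = (2*q+1)*2^J + S mod 2^J" by simp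
  moreover have "q < Suc S" unfolding q_def
    by (meson div_le_dividend le_imp_less_Suc order.trans)
  moreover have "S mod 2^J < 2^J" by simp
  ultimately show "\<exists>q<Suc S. \<exists>r<2^J. S = (2*q+1)*2^J + r" by blast
next
  assume "\<exists>q<Suc S. \<exists>r<2^J. S = (2*q+1)*2^J + r"
  then obtain q r where r: "r < 2^J" and S: "S = (2*q+1)*2^J + r" by blast
  have "S div 2^J = 2*q+1"
  proof -
    have "S = r + (2*q+1)*2^J" using S by simp
    moreover have "(r + (2*q+1)*2^J) div 2^J = r div 2^J + (2*q+1)"
      using div_mult_self1[of "2^J" r "2*q+1"] by simp
    ultimately have "S div 2^J = r div 2^J + (2*q+1)" by simp
    then show ?thesis using r by simp
  qed
  then show "mem J S" by (simp add: mem_def set_decode_def)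
qed

lemma mem_less: "mem J S \<Longrightarrow> J < S"
proof -
  assume "mem J S"
  then obtain q r where "S = (2*q+1)*2^J + r" using mem_iff by blast
  then have "2^J \<le> S" by simp
  moreover have "J < 2^J" by (rule less_exp)
  ultimately show "J < S" by linarith
qed

lemma mem_set_encode: "finite F \<Longrightarrow> mem J (set_encode F) \<longleftrightarrow> J \<in> F"
  by (simp add: mem_def)

lemma rf_lcons: "recfn n F \<Longrightarrow> recfn n G \<Longrightarrow> recfn n (\<lambda>e. lcons (F e) (G e))"
  unfolding lcons_def by (intro rf_Suc rf_pe)
lemma rf_ltl: "recfn n F \<Longrightarrow> recfn n (\<lambda>e. ltl (F e))"
  unfolding ltl_def by (intro rf_p2 rf_sub rf_const)
lemma rf_lhd: "recfn n F \<Longrightarrow> recfn n (\<lambda>e. lhd (F e))"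
  unfolding lhd_def by (intro rf_p1 rf_sub rf_const)

lemma recnat_ltls: "rec_nat L (\<lambda>k acc. ltl acc) i = ltls i L"
  by (induction i) (auto simp: ltls_def)

lemma rf_ltls: "recfn n F \<Longrightarrow> recfn n G \<Longrightarrow> recfn n (\<lambda>e. ltls (F e) (G e))"
proof -
  have "recfn 2 (\<lambda>e. ltls (e 0) (e 1))"
  proof (rule rf_primI[where G="\<lambda>acc k e. ltl acc" and Fz="\<lambda>e. e 1" and B="\<lambda>e. e 0"])
    show "recfn (Suc (Suc 2)) (\<lambda>e. ltl (e 0))" by (intro rf_ltl rf_proj) simp
  qed (auto intro: rf_proj simp only: recnat_ltls)
  then show "recfn n F \<Longrightarrow> recfn n G \<Longrightarrow> recfn n (\<lambda>e. ltls (F e) (G e))" by (rule rf_comp2)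
qed

lemma rf_lnth: "recfn n F \<Longrightarrow> recfn n G \<Longrightarrow> recfn n (\<lambda>e. lnth (F e) (G e))"
  unfolding lnth_def by (intro rf_lhd rf_ltls)

lemma rf_llen: "recfn n F \<Longrightarrow> recfn n (\<lambda>e. llen (F e))"
proof -
  have "recfn 1 (\<lambda>e. \<Sum>i<e 0. if ltls i (e 0) = 0 then 0 else 1)"
    by (intro rf_rules rf_ltls) simp_all
  then have "recfn 1 (\<lambda>e. llen (e 0))" by (rule rf_cong) (simp add: llen_def)
  then show "recfn n F \<Longrightarrow> recfn n (\<lambda>e. llen (F e))" by (rule rf_comp1)
qed

lemma rp_mem: "recfn n F \<Longrightarrow> recfn n G \<Longrightarrow> recpred n (\<lambda>e. mem (F e) (G e))"
proof -
  have "recpred 2 (\<lambda>e. \<exists>q<Suc (e 1). \<exists>r<2^(e 0). e 1 = (2*q+1)*2^(e 0) + r)"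
    by (intro rf_rules) simp_all
  then have "recpred 2 (\<lambda>e. mem (e 0) (e 1))" by (rule rp_cong) (simp only: mem_iff)
  then show "recfn n F \<Longrightarrow> recfn n G \<Longrightarrow> recpred n (\<lambda>e. mem (F e) (G e))" by (rule rp_comp2)
qed


declare list_encode.simps(2)[simp del] enc_Cons[simp]

fun pcode :: "recf \<Rightarrow> nat" where
  "pcode RZero = pe 0 0"
| "pcode RSucc = pe 1 0"
| "pcode (RProj i) = pe 2 i"
| "pcode (RComp f gs) = pe 3 (pe (pcode f) (list_encode (map pcode gs)))"
| "pcode (RPrim f g) = pe 4 (pe (pcode f) (pcode g))"
| "pcode (RMn f) = pe 5 (pcode f)"

definition jd :: "nat \<Rightarrow> nat \<Rightarrow> nat \<Rightarrow> nat" where "jd p L y = pe p (pe L y)"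

lemma jd_simps[simp]: "p1 (jd p L y) = p" "p1 (p2 (jd p L y)) = L" "p2 (p2 (jd p L y)) = y"
  by (simp_all add: jd_def)
lemma jd_eq[simp]: "jd p L y = jd p' L' y' \<longleftrightarrow> p = p' \<and> L = L' \<and> y = y'"
  by (simp add: jd_def)
lemma jd_split: "K = jd (p1 K) (p1 (p2 K)) (p2 (p2 K))"
  by (simp add: jd_def)

definition just' :: "(nat \<Rightarrow> bool) \<Rightarrow> nat \<Rightarrow> bool" where
"just' M J \<longleftrightarrow>
 (p1 (p1 J) = 0 \<and> p2 (p2 J) = 0) \<or>
 (p1 (p1 J) = 1 \<and> p1 (p2 J) \<noteq> 0 \<and> p2 (p2 J) = Suc (lhd (p1 (p2 J)))) \<or>
 (p1 (p1 J) = 2 \<and> p2 (p1 J) < llen (p1 (p2 J)) \<and> p2 (p2 J) = lnth (p1 (p2 J)) (p2 (p1 J))) \<or>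
 (p1 (p1 J) = 3 \<and> (\<exists>K. M K \<and> p1 K = p1 (p2 (p1 J)) \<and> p2 (p2 K) = p2 (p2 J) \<and>
     llen (p1 (p2 K)) = llen (p2 (p2 (p1 J))) \<and>
     (\<forall>k<llen (p2 (p2 (p1 J))). M (jd (lnth (p2 (p2 (p1 J))) k) (p1 (p2 J)) (lnth (p1 (p2 K)) k))))) \<or>
 (p1 (p1 J) = 4 \<and> p1 (p2 J) \<noteq> 0 \<and> lhd (p1 (p2 J)) = 0 \<and>
     M (jd (p1 (p2 (p1 J))) (ltl (p1 (p2 J))) (p2 (p2 J)))) \<or>
 (p1 (p1 J) = 4 \<and> p1 (p2 J) \<noteq> 0 \<and> lhd (p1 (p2 J)) \<noteq> 0 \<and>
     (\<exists>K. M K \<and> p1 K = p1 J \<and> p1 (p2 K) = lcons (lhd (p1 (p2 J)) - 1) (ltl (p1 (p2 J))) \<and>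
        M (jd (p2 (p2 (p1 J))) (lcons (p2 (p2 K)) (p1 (p2 K))) (p2 (p2 J))))) \<or>
 (p1 (p1 J) = 5 \<and> M (jd (p2 (p1 J)) (lcons (p2 (p2 J)) (p1 (p2 J))) 0) \<and>
     (\<forall>z<p2 (p2 J). \<exists>K. M K \<and> p1 K = p2 (p1 J) \<and> p1 (p2 K) = lcons z (p1 (p2 J)) \<and> p2 (p2 K) \<noteq> 0))"

definition just :: "nat \<Rightarrow> nat \<Rightarrow> bool" where
"just S J \<longleftrightarrow>
 (p1 (p1 J) = 0 \<and> p2 (p2 J) = 0) \<or>
 (p1 (p1 J) = 1 \<and> p1 (p2 J) \<noteq> 0 \<and> p2 (p2 J) = Suc (lhd (p1 (p2 J)))) \<or>
 (p1 (p1 J) = 2 \<and> p2 (p1 J) < llen (p1 (p2 J)) \<and> p2 (p2 J) = lnth (p1 (p2 J)) (p2 (p1 J))) \<or>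
 (p1 (p1 J) = 3 \<and> (\<exists>K<S. mem K S \<and> p1 K = p1 (p2 (p1 J)) \<and> p2 (p2 K) = p2 (p2 J) \<and>
     llen (p1 (p2 K)) = llen (p2 (p2 (p1 J))) \<and>
     (\<forall>k<llen (p2 (p2 (p1 J))). mem (jd (lnth (p2 (p2 (p1 J))) k) (p1 (p2 J)) (lnth (p1 (p2 K)) k)) S))) \<or>
 (p1 (p1 J) = 4 \<and> p1 (p2 J) \<noteq> 0 \<and> lhd (p1 (p2 J)) = 0 \<and>
     mem (jd (p1 (p2 (p1 J))) (ltl (p1 (p2 J))) (p2 (p2 J))) S) \<or>
 (p1 (p1 J) = 4 \<and> p1 (p2 J) \<noteq> 0 \<and> lhd (p1 (p2 J)) \<noteq> 0 \<and>
     (\<exists>K<S. mem K S \<and> p1 K = p1 J \<and> p1 (p2 K) = lcons (lhd (p1 (p2 J)) - 1) (ltl (p1 (p2 J))) \<and>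
        mem (jd (p2 (p2 (p1 J))) (lcons (p2 (p2 K)) (p1 (p2 K))) (p2 (p2 J))) S)) \<or>
 (p1 (p1 J) = 5 \<and> mem (jd (p2 (p1 J)) (lcons (p2 (p2 J)) (p1 (p2 J))) 0) S \<and>
     (\<forall>z<p2 (p2 J). \<exists>K<S. mem K S \<and> p1 K = p2 (p1 J) \<and> p1 (p2 K) = lcons z (p1 (p2 J)) \<and> p2 (p2 K) \<noteq> 0))"

lemma ex_mem_bound: "(\<exists>K. K < S \<and> mem K S \<and> P K) = (\<exists>K. mem K S \<and> P K)"
  using mem_less by blast

lemma just_eq: "just S J \<longleftrightarrow> just' (\<lambda>K. mem K S) J"
  unfolding just_def just'_def by (simp only: ex_mem_bound)

definition valid :: "nat \<Rightarrow> bool" where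
  "valid S \<longleftrightarrow> (\<forall>J<S. mem J S \<longrightarrow> just S J)"

lemma valid_just': "valid S \<Longrightarrow> mem J S \<Longrightarrow> just' (\<lambda>K. mem K S) J"
  unfolding valid_def using mem_less just_eq by blast

lemma enc_Nil: "list_encode [] = 0" by simp

lemma sound:
  assumes v: "valid S"
  shows "mem (jd (pcode f) (list_encode xs) y) S \<Longrightarrow> eval_rec f xs y"
proof (induction f arbitrary: xs y)
  case RZero
  then have "just' (\<lambda>K. mem K S) (jd (pcode RZero) (list_encode xs) y)" using valid_just'[OF v] by blast
  then have "y = 0" unfolding just'_def by simp
  then show ?case by (auto intro: eval_rec.intros)
next
  case RSucc
  then have j: "just' (\<lambda>K. mem K S) (jd (pcode RSucc) (list_encode xs) y)" using valid_just'[OF v] by blast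
  then have "list_encode xs \<noteq> 0" and y: "y = Suc (lhd (list_encode xs))" unfolding just'_def by simp_all
  then obtain x xs' where xs: "xs = x # xs'" by (cases xs) auto
  then show ?case using y by (auto simp: enc_Cons intro: eval_rec.intros)
next
  case (RProj i)
  then have j: "just' (\<lambda>K. mem K S) (jd (pcode (RProj i)) (list_encode xs) y)" using valid_just'[OF v] by blast
  then have "i < length xs" "y = xs ! i" unfolding just'_def by (simp_all add: llen_enc lnth_enc)
  then show ?case by (auto intro: eval_rec.intros)
next
  case (RComp f gs)
  then have j: "just' (\<lambda>K. mem K S) (jd (pcode (RComp f gs)) (list_encode xs) y)" using valid_just'[OF v] by blast
  then obtain K where K: "mem K S" "p1 K = pcode f" "p2 (p2 K) = y" "llen (p1 (p2 K)) = length gs"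
    and ks: "\<forall>k<length gs. mem (jd (pcode (gs ! k)) (list_encode xs) (lnth (p1 (p2 K)) k)) S"
    unfolding just'_def by (auto simp: llen_enc lnth_enc)
  define ys where "ys = list_decode (p1 (p2 K))"
  have ysK: "p1 (p2 K) = list_encode ys" unfolding ys_def by simp
  have "K = jd (pcode f) (list_encode ys) y" using jd_split[of K] K ysK by simp
  then have "eval_rec f ys y" using RComp.IH(1) K(1) by simp
  moreover have "list_all2 (\<lambda>g y. eval_rec g xs y) gs ys"
  proof (rule list_all2_all_nthI)
    show "length gs = length ys" using K(4) ysK by (simp add: llen_enc)
    fix k assume k: "k < length gs"
    then have "k < length ys" using K(4) ysK by (simp add: llen_enc)
    then have "mem (jd (pcode (gs ! k)) (list_encode xs) (ys ! k)) S" using ks[rule_format, OF k] ysK lnth_enc[of k ys] by simp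
    then show "eval_rec (gs ! k) xs (ys ! k)" using RComp.IH(2) k by simp
  qed
  ultimately show ?case by (auto intro: eval_rec.intros)
next
  case (RPrim f g)
  have main: "mem (jd (pcode (RPrim f g)) (list_encode (n # xs')) z) S \<Longrightarrow> eval_rec (RPrim f g) (n # xs') z"
    for n xs' z
  proof (induction n arbitrary: z)
    case 0
    then have "just' (\<lambda>K. mem K S) (jd (pcode (RPrim f g)) (list_encode (0 # xs')) z)" using valid_just'[OF v] by blast
    then have "mem (jd (pcode f) (list_encode xs') z) S" unfolding just'_def by (simp add: enc_Cons)
    then show ?case using RPrim.IH(1) by (auto intro: eval_rec.intros)
  next
    case (Suc n)
    then have "just' (\<lambda>K. mem K S) (jd (pcode (RPrim f g)) (list_encode (Suc n # xs')) z)" using valid_just'[OF v] by blast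
    then obtain K where K: "mem K S" "p1 K = pcode (RPrim f g)" "p1 (p2 K) = list_encode (n # xs')"
       "mem (jd (pcode g) (lcons (p2 (p2 K)) (list_encode (n # xs'))) z) S"
      unfolding just'_def by (auto simp: enc_Cons)
    have "K = jd (pcode (RPrim f g)) (list_encode (n # xs')) (p2 (p2 K))" using jd_split[of K] K by simp
    then have "eval_rec (RPrim f g) (n # xs') (p2 (p2 K))" using Suc.IH K(1) by simp
    moreover have "eval_rec g (p2 (p2 K) # n # xs') z" using K(4) RPrim.IH(2) by simp
    ultimately show ?case by (auto intro: eval_rec.intros)
  qed
  have "just' (\<lambda>K. mem K S) (jd (pcode (RPrim f g)) (list_encode xs) y)" using RPrim.prems valid_just'[OF v] by blast
  then have "list_encode xs \<noteq> 0" unfolding just'_def by auto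
  then obtain n xs' where "xs = n # xs'" by (cases xs) auto
  then show ?case using main RPrim.prems by simp
next
  case (RMn f)
  then have j: "just' (\<lambda>K. mem K S) (jd (pcode (RMn f)) (list_encode xs) y)" using valid_just'[OF v] by blast
  then have a: "mem (jd (pcode f) (list_encode (y # xs)) 0) S"
    and b: "\<forall>z<y. \<exists>K. mem K S \<and> p1 K = pcode f \<and> p1 (p2 K) = list_encode (z # xs) \<and> p2 (p2 K) \<noteq> 0"
    unfolding just'_def by (simp_all add: enc_Cons)
  have "eval_rec f (y # xs) 0" using a RMn.IH by simp
  moreover have "\<forall>z<y. \<exists>v>0. eval_rec f (z # xs) v"
  proof (intro allI impI)
    fix z assume "z < y"
    then obtain K where K: "mem K S" "p1 K = pcode f" "p1 (p2 K) = list_encode (z # xs)" "p2 (p2 K) \<noteq> 0"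
      using b by blast
    have "K = jd (pcode f) (list_encode (z # xs)) (p2 (p2 K))" using jd_split[of K] K by simp
    then have "eval_rec f (z # xs) (p2 (p2 K))" using RMn.IH K(1) by simp
    then show "\<exists>v>0. eval_rec f (z # xs) v" using K(4) by blast
  qed
  ultimately show ?case by (auto intro: eval_rec.intros)
qed

lemma just'_mono: "just' M J \<Longrightarrow> (\<And>K. M K \<Longrightarrow> M' K) \<Longrightarrow> just' M' J"
  unfolding just'_def
  apply (elim disjE)
        apply (rule disjI1, assumption)
       apply (rule disjI2, rule disjI1, assumption)
      apply (rule disjI2, rule disjI2, rule disjI1, assumption)
     apply (rule disjI2, rule disjI2, rule disjI2, rule disjI1, blast)
    apply (rule disjI2, rule disjI2, rule disjI2, rule disjI2, rule disjI1, blast)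
   apply (rule disjI2, rule disjI2, rule disjI2, rule disjI2, rule disjI2, rule disjI1, blast)
  apply (rule disjI2, rule disjI2, rule disjI2, rule disjI2, rule disjI2, rule disjI2, blast)
  done

lemma lnth_map_code: "k < length gs \<Longrightarrow> lnth (list_encode (map pcode gs)) k = pcode (gs ! k)"
  by (simp add: lnth_enc)

lemma j_zero: "just' M (jd (pcode RZero) L 0)"
  unfolding just'_def by simp
lemma j_succ: "just' M (jd (pcode RSucc) (list_encode (x # xs)) (Suc x))"
  unfolding just'_def by simp
lemma j_proj: "i < length xs \<Longrightarrow> just' M (jd (pcode (RProj i)) (list_encode xs) (xs ! i))"
  unfolding just'_def by (simp add: llen_enc lnth_enc)
lemma j_comp:
  assumes "M (jd (pcode f) (list_encode ys) z)" "length ys = length gs"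
    "\<forall>k<length gs. M (jd (pcode (gs ! k)) (list_encode xs) (ys ! k))"
  shows "just' M (jd (pcode (RComp f gs)) (list_encode xs) z)"
proof -
  have "\<exists>K. M K \<and> p1 K = pcode f \<and> p2 (p2 K) = z \<and> llen (p1 (p2 K)) = length gs \<and>
     (\<forall>k<length gs. M (jd (pcode (gs ! k)) (list_encode xs) (lnth (p1 (p2 K)) k)))"
    using assms by (intro exI[of _ "jd (pcode f) (list_encode ys) z"]) (simp add: llen_enc lnth_enc)
  then show ?thesis unfolding just'_def by (simp add: llen_enc lnth_map_code)
qed
lemma j_prim0: "M (jd (pcode f) (list_encode xs) y) \<Longrightarrow> just' M (jd (pcode (RPrim f g)) (list_encode (0 # xs)) y)"
  unfolding just'_def by simp
lemma j_primS:
  assumes "M (jd (pcode (RPrim f g)) (list_encode (n # xs)) y)" "M (jd (pcode g) (list_encode (y # n # xs)) z)"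
  shows "just' M (jd (pcode (RPrim f g)) (list_encode (Suc n # xs)) z)"
proof -
  have "\<exists>K. M K \<and> p1 K = pcode (RPrim f g) \<and> p1 (p2 K) = lcons n (list_encode xs) \<and>
        M (jd (pcode g) (lcons (p2 (p2 K)) (p1 (p2 K))) z)"
    using assms by (intro exI[of _ "jd (pcode (RPrim f g)) (list_encode (n # xs)) y"]) simp
  then show ?thesis unfolding just'_def by simp
qed
lemma j_mn:
  assumes "M (jd (pcode f) (list_encode (y # xs)) 0)" "\<forall>z<y. \<exists>v>0. M (jd (pcode f) (list_encode (z # xs)) v)"
  shows "just' M (jd (pcode (RMn f)) (list_encode xs) y)"
proof -
  have "\<forall>z<y. \<exists>K. M K \<and> p1 K = pcode f \<and> p1 (p2 K) = lcons z (list_encode xs) \<and> p2 (p2 K) \<noteq> 0"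
  proof (intro allI impI)
    fix z assume "z < y"
    then obtain v where "v > 0" "M (jd (pcode f) (list_encode (z # xs)) v)" using assms(2) by blast
    then show "\<exists>K. M K \<and> p1 K = pcode f \<and> p1 (p2 K) = lcons z (list_encode xs) \<and> p2 (p2 K) \<noteq> 0"
      by (intro exI[of _ "jd (pcode f) (list_encode (z # xs)) v"]) simp
  qed
  then show ?thesis using assms(1) unfolding just'_def by simp
qed

definition closedF :: "nat set \<Rightarrow> bool" where
  "closedF F \<longleftrightarrow> finite F \<and> (\<forall>J\<in>F. just' (\<lambda>K. K \<in> F) J)"

lemma closedF_UN: "finite I \<Longrightarrow> (\<And>i. i \<in> I \<Longrightarrow> closedF (Fs i)) \<Longrightarrow> closedF (\<Union>i\<in>I. Fs i)"
  unfolding closedF_def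
proof (intro conjI ballI)
  assume I: "finite I" and c: "\<And>i. i \<in> I \<Longrightarrow> finite (Fs i) \<and> (\<forall>J\<in>Fs i. just' (\<lambda>K. K \<in> Fs i) J)"
  show "finite (\<Union>i\<in>I. Fs i)" using I c by blast
  fix J assume "J \<in> (\<Union>i\<in>I. Fs i)"
  then obtain i where i: "i \<in> I" "J \<in> Fs i" by blast
  then have "just' (\<lambda>K. K \<in> Fs i) J" using c by blast
  then show "just' (\<lambda>K. K \<in> (\<Union>i\<in>I. Fs i)) J" by (rule just'_mono) (use i in blast)
qed
lemma closedF_Un: "closedF F \<Longrightarrow> closedF G \<Longrightarrow> closedF (F \<union> G)"
  unfolding closedF_def by (auto elim!: just'_mono)
lemma closedF_insert: "closedF F \<Longrightarrow> just' (\<lambda>K. K \<in> insert J F) J \<Longrightarrow> closedF (insert J F)"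
  unfolding closedF_def by (auto elim!: just'_mono)
lemma closedF_empty: "closedF {}" unfolding closedF_def by simp

lemma complete:
  "eval_rec f xs y \<Longrightarrow> \<exists>F. closedF F \<and> jd (pcode f) (list_encode xs) y \<in> F"
proof (induction rule: eval_rec.induct)
  case (ev_zero xs)
  show ?case using closedF_insert[OF closedF_empty j_zero] by blast
next
  case (ev_succ x xs)
  show ?case using closedF_insert[OF closedF_empty j_succ] by blast
next
  case (ev_proj i xs)
  show ?case using closedF_insert[OF closedF_empty j_proj[OF ev_proj.hyps]] by blast
next
  case (ev_comp xs gs ys f z)
  from ev_comp.IH obtain F0 where F0: "closedF F0" "jd (pcode f) (list_encode ys) z \<in> F0" by blast
  have "\<forall>k<length gs. \<exists>F. closedF F \<and> jd (pcode (gs ! k)) (list_encode xs) (ys ! k) \<in> F"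
    using ev_comp.IH(1) unfolding list_all2_conv_all_nth by blast
  then obtain Fs where Fs: "\<forall>k<length gs. closedF (Fs k) \<and> jd (pcode (gs ! k)) (list_encode xs) (ys ! k) \<in> Fs k"
    by metis
  define G where "G = F0 \<union> (\<Union>k\<in>{..<length gs}. Fs k)"
  have G: "closedF G" unfolding G_def using F0 Fs by (intro closedF_Un closedF_UN) auto
  have "length ys = length gs" using ev_comp.IH(1) by (simp add: list_all2_conv_all_nth)
  moreover have m1: "jd (pcode f) (list_encode ys) z \<in> G" using F0 unfolding G_def by blast
  moreover have m2: "\<forall>k<length gs. jd (pcode (gs ! k)) (list_encode xs) (ys ! k) \<in> G"
    using Fs unfolding G_def by blast
  ultimately have "just' (\<lambda>K. K \<in> G) (jd (pcode (RComp f gs)) (list_encode xs) z)"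
    by (intro j_comp)
  then have "just' (\<lambda>K. K \<in> insert (jd (pcode (RComp f gs)) (list_encode xs) z) G) (jd (pcode (RComp f gs)) (list_encode xs) z)"
    by (rule just'_mono) blast
  then show ?case using closedF_insert[OF G] by blast
next
  case (ev_prim0 f xs y g)
  then obtain F0 where F0: "closedF F0" "jd (pcode f) (list_encode xs) y \<in> F0" by blast
  have "just' (\<lambda>K. K \<in> insert (jd (pcode (RPrim f g)) (list_encode (0 # xs)) y) F0) (jd (pcode (RPrim f g)) (list_encode (0 # xs)) y)"
    using F0 by (intro j_prim0) blast
  then show ?case using closedF_insert[OF F0(1)] by blast
next
  case (ev_primS f g n xs y z)
  then obtain F0 where F0: "closedF F0" "jd (pcode (RPrim f g)) (list_encode (n # xs)) y \<in> F0" by blast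
  from ev_primS obtain F1 where F1: "closedF F1" "jd (pcode g) (list_encode (y # n # xs)) z \<in> F1" by blast
  have G: "closedF (F0 \<union> F1)" using F0 F1 by (intro closedF_Un)
  have "just' (\<lambda>K. K \<in> insert (jd (pcode (RPrim f g)) (list_encode (Suc n # xs)) z) (F0 \<union> F1)) (jd (pcode (RPrim f g)) (list_encode (Suc n # xs)) z)"
    using F0 F1 by (intro j_primS) blast+
  then show ?case using closedF_insert[OF G] by blast
next
  case (ev_mn f y xs)
  then obtain F0 where F0: "closedF F0" "jd (pcode f) (list_encode (y # xs)) 0 \<in> F0" by blast
  have "\<forall>z<y. \<exists>v F. v > 0 \<and> closedF F \<and> jd (pcode f) (list_encode (z # xs)) v \<in> F"
    using ev_mn.IH(2) by blast
  then obtain vs Fs where Fs: "\<forall>z<y. vs z > 0 \<and> closedF (Fs z) \<and> jd (pcode f) (list_encode (z # xs)) (vs z) \<in> Fs z"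
    by metis
  define G where "G = F0 \<union> (\<Union>k\<in>{..<y}. Fs k)"
  have G: "closedF G" unfolding G_def using F0 Fs by (intro closedF_Un closedF_UN) auto
  have "just' (\<lambda>K. K \<in> insert (jd (pcode (RMn f)) (list_encode xs) y) G) (jd (pcode (RMn f)) (list_encode xs) y)"
  proof (rule j_mn)
    show "jd (pcode f) (list_encode (y # xs)) 0 \<in> insert (jd (pcode (RMn f)) (list_encode xs) y) G"
      using F0 unfolding G_def by auto
    show "\<forall>z<y. \<exists>v>0. jd (pcode f) (list_encode (z # xs)) v \<in> insert (jd (pcode (RMn f)) (list_encode xs) y) G"
      using Fs unfolding G_def by blast
  qed
  then show ?case using closedF_insert[OF G] by blast
qed

lemma valid_set: "closedF F \<Longrightarrow> valid (set_encode F)"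
proof -
  assume c: "closedF F"
  then have fin: "finite F" by (simp add: closedF_def)
  have e: "(\<lambda>K. mem K (set_encode F)) = (\<lambda>K. K \<in> F)" using mem_set_encode[OF fin] by auto
  show ?thesis unfolding valid_def just_eq e using c mem_set_encode[OF fin] by (auto simp: closedF_def)
qed

definition H :: "nat \<Rightarrow> nat \<Rightarrow> bool" where
  "H e t \<longleftrightarrow> (\<exists>S<t. valid S \<and> (\<exists>y<S. mem (jd e (lcons e 0) y) S))"

definition halts :: "nat \<Rightarrow> bool" where "halts e \<longleftrightarrow> (\<exists>t. H e t)"

lemma H_mono: "H e t \<Longrightarrow> t \<le> t' \<Longrightarrow> H e t'"
  unfolding H_def using order.strict_trans2 by blast

lemma halts_code: "halts (pcode f) \<longleftrightarrow> (\<exists>y. eval_rec f [pcode f] y)"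
proof
  assume "halts (pcode f)"
  then obtain S y where "valid S" "mem (jd (pcode f) (lcons (pcode f) 0) y) S"
    unfolding halts_def H_def by blast
  then show "\<exists>y. eval_rec f [pcode f] y" using sound[of S f "[pcode f]" y] by auto
next
  assume "\<exists>y. eval_rec f [pcode f] y"
  then obtain y where "eval_rec f [pcode f] y" by blast
  then obtain F where F: "closedF F" "jd (pcode f) (list_encode [pcode f]) y \<in> F" using complete by blast
  have fin: "finite F" using F by (simp add: closedF_def)
  have v: "valid (set_encode F)" using valid_set[OF F(1)] .
  have m: "mem (jd (pcode f) (lcons (pcode f) 0) y) (set_encode F)" using F(2) mem_set_encode[OF fin] by simp
  have "y \<le> jd (pcode f) (lcons (pcode f) 0) y" unfolding jd_def by (rule order.trans[OF pe_ge2 pe_ge2])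
  then have "y < set_encode F" using mem_less[OF m] by simp
  then have "H (pcode f) (Suc (set_encode F))" unfolding H_def using v m by blast
  then show "halts (pcode f)" unfolding halts_def by blast
qed


lemma rp_H: "recpred 2 (\<lambda>e. H (e 0) (e 1))"
  unfolding H_def valid_def just_def jd_def
  by (intro rf_rules rf_pe rf_p1 rf_p2 rf_lcons rf_ltl rf_lhd rf_lnth rf_llen rp_mem) simp_all

lemma eval_det: "eval_rec f xs y \<Longrightarrow> eval_rec f xs y' \<Longrightarrow> y = y'"
proof (induction arbitrary: y' rule: eval_rec.induct)
  case (ev_zero xs)
  then show ?case by (cases rule: eval_rec.cases) auto
next
  case (ev_succ x xs)
  then show ?case by (cases rule: eval_rec.cases) auto
next
  case (ev_proj i xs)
  from ev_proj.prems show ?case by (cases rule: eval_rec.cases) auto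
next
  case (ev_comp xs gs ys f z)
  from ev_comp.prems obtain ys' where ys': "list_all2 (\<lambda>g y. eval_rec g xs y) gs ys'" "eval_rec f ys' y'"
    by (cases rule: eval_rec.cases) auto
  have "ys = ys'"
  proof (rule nth_equalityI)
    show "length ys = length ys'" using ys'(1) ev_comp.IH(1) by (simp add: list_all2_conv_all_nth)
    fix i assume "i < length ys"
    then show "ys ! i = ys' ! i" using ys'(1) ev_comp.IH(1) by (auto simp: list_all2_conv_all_nth)
  qed
  then show ?case using ev_comp.IH(2) ys'(2) by blast
next
  case (ev_prim0 f xs y g)
  from ev_prim0.prems have "eval_rec f xs y'" by (cases rule: eval_rec.cases) auto
  then show ?case using ev_prim0.IH by blast
next
  case (ev_primS f g n xs y z)
  from ev_primS.prems obtain y'' where "eval_rec (RPrim f g) (n # xs) y''" "eval_rec g (y'' # n # xs) y'"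
    by (cases rule: eval_rec.cases) auto
  then show ?case using ev_primS.IH by blast
next
  case (ev_mn f y xs)
  from ev_mn.prems have a: "eval_rec f (y' # xs) 0 \<and> (\<forall>z<y'. \<exists>v>0. eval_rec f (z # xs) v)"
    by (cases rule: eval_rec.cases) auto
  show ?case
  proof (rule ccontr)
    assume "y \<noteq> y'"
    then consider "y < y'" | "y' < y" by linarith
    then show False
    proof cases
      case 1
      then obtain v where v: "v > 0" "eval_rec f (y # xs) v" using a by blast
      have "0 = v" using ev_mn.IH(1) v(2) by blast
      then show False using v(1) by simp
    next
      case 2
      then obtain v where v: "v > 0" "\<forall>w. eval_rec f (y' # xs) w \<longrightarrow> v = w"
        using ev_mn.IH(2) by blast
      then have "v = 0" using a by blast
      then show False using v(1) by simp
    qed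
  qed
qed

lemma not_rec_halts: "\<not> recpred 1 (\<lambda>e. halts (e 0))"
proof
  assume "recpred 1 (\<lambda>e. halts (e 0))"
  then obtain c where c: "\<And>xs. length xs = 1 \<Longrightarrow> eval_rec c xs (if halts (xs ! 0) then 1 else 0)"
    unfolding recpred_def recfn_def by blast
  define d where "d = RMn (RComp c [RProj 1])"
  have cl: "eval_rec (RComp c [RProj 1]) [y, x] (if halts x then 1 else 0)" for x y
  proof (rule ev_comp[where ys="[x]"])
    show "list_all2 (\<lambda>g y'. eval_rec g [y, x] y') [RProj 1] [x]"
      using ev_proj[of 1 "[y, x]"] by simp
    show "eval_rec c [x] (if halts x then 1 else 0)" using c[of "[x]"] by simp
  qed
  show False
  proof (cases "halts (pcode d)")
    case True
    then obtain y where "eval_rec d [pcode d] y" using halts_code by blast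
    then have "eval_rec (RComp c [RProj 1]) [y, pcode d] 0" unfolding d_def
      by (cases rule: eval_rec.cases) auto
    then have "(if halts (pcode d) then 1 else (0::nat)) = 0" by (rule eval_det[OF cl])
    then show False using True by simp
  next
    case False
    have "\<forall>x. \<not> halts x \<longrightarrow> eval_rec (RMn (RComp c [RProj 1])) [x] 0"
    proof (intro allI impI)
      fix x assume "\<not> halts x"
      then have "eval_rec (RComp c [RProj 1]) [0, x] 0" using cl[of 0 x] by simp
      then show "eval_rec (RMn (RComp c [RProj 1])) [x] 0" by (intro ev_mn) auto
    qed
    then have "\<forall>x. \<not> halts x \<longrightarrow> eval_rec d [x] 0" by (simp only: d_def[symmetric])
    then have "eval_rec d [pcode d] 0" using False by blast
    then show False using halts_code False by blast
  qed
qed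

lemma not_rec_nhalts: "\<not> recpred 1 (\<lambda>e. \<not> halts (e 0))"
proof
  assume "recpred 1 (\<lambda>e. \<not> halts (e 0))"
  then have "recpred 1 (\<lambda>e. \<not> \<not> halts (e 0))" by (rule rp_not)
  then have "recpred 1 (\<lambda>e. halts (e 0))" by (rule rp_cong) simp
  then show False using not_rec_halts by blast
qed


lemma recursive1_iff: "recursive1 f \<longleftrightarrow> recfn 1 (\<lambda>e. f (e 0))"
proof
  assume "recursive1 f"
  then obtain c where c: "\<And>x. eval_rec c [x] (f x)" unfolding recursive1_def by blast
  show "recfn 1 (\<lambda>e. f (e 0))" unfolding recfn_def
  proof (intro exI allI impI)
    fix xs :: "nat list" assume "length xs = 1"
    then obtain x where "xs = [x]" by (cases xs) auto
    then show "eval_rec c xs (f (xs ! 0))" using c by simp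
  qed
next
  assume "recfn 1 (\<lambda>e. f (e 0))"
  then obtain c where c: "\<And>xs. length xs = 1 \<Longrightarrow> eval_rec c xs (f (xs ! 0))" unfolding recfn_def by blast
  show "recursive1 f" unfolding recursive1_def using c[of "[_]"] by auto
qed

lemma recursive2_iff: "recursive2 f \<longleftrightarrow> recfn 2 (\<lambda>e. f (e 0) (e 1))"
proof
  assume "recursive2 f"
  then obtain c where c: "\<And>x y. eval_rec c [x, y] (f x y)" unfolding recursive2_def by blast
  show "recfn 2 (\<lambda>e. f (e 0) (e 1))" unfolding recfn_def
  proof (intro exI allI impI)
    fix xs :: "nat list" assume "length xs = 2"
    then obtain x y where "xs = [x, y]"
      by (cases xs; cases "tl xs") (auto simp: numeral_2_eq_2)
    then show "eval_rec c xs (f (xs ! 0) (xs ! 1))" using c by simp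
  qed
next
  assume "recfn 2 (\<lambda>e. f (e 0) (e 1))"
  then obtain c where c: "\<And>xs. length xs = 2 \<Longrightarrow> eval_rec c xs (f (xs ! 0) (xs ! 1))" unfolding recfn_def by blast
  show "recursive2 f" unfolding recursive2_def
  proof (intro exI allI)
    fix x y show "eval_rec c [x, y] (f x y)" using c[of "[x, y]"] by simp
  qed
qed

lemma rf_rec2: "recursive2 f \<Longrightarrow> recfn n F \<Longrightarrow> recfn n G \<Longrightarrow> recfn n (\<lambda>e. f (F e) (G e))"
  unfolding recursive2_iff by (rule rf_comp2)

lemma even_iff_ex: "even (x::nat) \<longleftrightarrow> (\<exists>h<Suc x. x = 2 * h)"
  by (auto simp: even_iff_mod_2_eq_zero)

lemma no_decide:
  assumes comp: "computable_real_seq y" and l: "0 \<le> l" "l < u"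
    and up: "\<And>k. P k \<Longrightarrow> y k \<ge> u" and lo: "\<And>k. \<not> P k \<Longrightarrow> y k \<le> l"
  shows "recpred 1 (\<lambda>e. P (e 0))"
proof -
  obtain r where r: "computable_rat_dseq r" and rb: "\<And>n k. \<bar>of_rat (r n k) - y n\<bar> \<le> (1/2) ^ k"
    using comp unfolding computable_real_seq_def by blast
  obtain a b s where ra: "recursive2 a" and rbb: "recursive2 b" and rs: "recursive2 s"
    and rr: "\<And>n k. b n k \<noteq> 0 \<and> r n k = (-1) ^ (s n k) * of_nat (a n k) / of_nat (b n k)"
    using r unfolding computable_rat_dseq_def by blast
  obtain j where j: "(1/2::real) ^ j < (u - l) / 4"
    using real_arch_pow_inv[of "(u - l) / 4" "1/2"] l by auto
  define e where "e = (1/2::real) ^ j"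
  have e_pos: "e > 0" unfolding e_def by simp
  have e2: "e * 2 ^ j = 1" unfolding e_def by (simp add: power_one_over)
  define p where "p = nat \<lfloor>l * 2 ^ j\<rfloor> + 2"
  have fl: "real (nat \<lfloor>l * 2 ^ j\<rfloor>) > l * 2 ^ j - 1" "real (nat \<lfloor>l * 2 ^ j\<rfloor>) \<le> l * 2 ^ j"
    using l by (simp_all add: of_nat_nat)
  define \<theta> where "\<theta> = real p * e"
  have th1: "\<theta> > l + e"
  proof -
    have "\<theta> = (real (nat \<lfloor>l * 2 ^ j\<rfloor>) + 2) * e" unfolding \<theta>_def p_def by simp
    also have "\<dots> > (l * 2 ^ j + 1) * e" using fl(1) e_pos by (intro mult_strict_right_mono) auto
    also have "(l * 2 ^ j + 1) * e = l + e" using e2 by (simp add: algebra_simps)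
    finally show ?thesis .
  qed
  have th2: "\<theta> < u - e"
  proof -
    have "\<theta> = (real (nat \<lfloor>l * 2 ^ j\<rfloor>) + 2) * e" unfolding \<theta>_def p_def by simp
    also have "\<dots> \<le> (l * 2 ^ j + 2) * e" using fl(2) e_pos by (intro mult_right_mono) auto
    also have "(l * 2 ^ j + 2) * e = l + 2 * e" using e2 by (simp add: algebra_simps)
    also have "\<dots> < u - e" using j e_pos unfolding e_def[symmetric] by (simp add: field_simps)
    finally show ?thesis .
  qed
  have th0: "\<theta> > 0" using th1 l e_pos by linarith
  define D where "D k \<longleftrightarrow> even (s k j) \<and> p * b k j < a k j * 2 ^ j" for k
  have D_iff: "D k \<longleftrightarrow> of_rat (r k j) > \<theta>" for k
  proof (cases "even (s k j)")
    case True
    have bpos: "real (b k j) > 0" using rr[of k j] by simp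
    have "of_rat (r k j) = real (a k j) / real (b k j)" using rr[of k j] True
      by (simp add: of_rat_divide)
    moreover have "(\<theta> < real (a k j) / real (b k j)) \<longleftrightarrow> real p * real (b k j) < real (a k j) * 2 ^ j"
    proof -
      have th: "\<theta> = real p / 2 ^ j" unfolding \<theta>_def e_def by (simp add: power_one_over)
      have "(real p / 2 ^ j < real (a k j) / real (b k j)) \<longleftrightarrow> (real p / 2 ^ j * real (b k j) < real (a k j))"
        using bpos by (simp add: less_divide_eq)
      also have "\<dots> \<longleftrightarrow> (real p * real (b k j) / 2 ^ j < real (a k j))" by simp
      also have "\<dots> \<longleftrightarrow> real p * real (b k j) < real (a k j) * 2 ^ j" by (simp add: divide_less_eq)
      finally show ?thesis unfolding th .
    qed
    moreover have "real p * real (b k j) < real (a k j) * 2 ^ j \<longleftrightarrow> p * b k j < a k j * 2 ^ j"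
      by (metis of_nat_less_iff of_nat_mult of_nat_numeral of_nat_power)
    ultimately show ?thesis unfolding D_def using True by simp
  next
    case False
    have "of_rat (r k j) = - (real (a k j) / real (b k j))" using rr[of k j] False
      by (simp add: of_rat_divide of_rat_minus)
    also have "\<dots> \<le> 0" by simp
    finally have h: "of_rat (r k j) \<le> (0::real)" .
    have "\<not> (\<theta> < of_rat (r k j))" using h th0 by linarith
    then show ?thesis unfolding D_def using False by simp
  qed
  have PD: "P k \<longleftrightarrow> D k" for k
  proof
    assume "P k"
    then have "y k \<ge> u" by (rule up)
    then have "of_rat (r k j) \<ge> u - e" using rb[of k j] unfolding e_def by linarith
    then show "D k" using D_iff th2 by simp
  next
    assume "D k"
    then have g: "of_rat (r k j) > \<theta>" using D_iff by simp
    show "P k"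
    proof (rule ccontr)
      assume "\<not> P k"
      then have "y k \<le> l" by (rule lo)
      then have "of_rat (r k j) \<le> l + e" using rb[of k j] unfolding e_def by linarith
      then show False using g th1 by simp
    qed
  qed
  have "recpred 1 (\<lambda>e. (\<exists>h<Suc (s (e 0) j). s (e 0) j = 2 * h) \<and> p * b (e 0) j < a (e 0) j * 2 ^ j)"
    by (intro rf_rules rf_rec2[OF rs] rf_rec2[OF ra] rf_rec2[OF rbb]) simp_all
  then show ?thesis by (rule rp_cong) (simp add: PD D_def even_iff_ex)
qed

lemma no_decide_halts:
  assumes "computable_real_seq y" "0 \<le> l" "l < u"
    "\<And>k. halts k \<Longrightarrow> y k \<ge> u" "\<And>k. \<not> halts k \<Longrightarrow> y k \<le> l"
  shows False
  using no_decide[of y l u halts] assms not_rec_halts by blast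

lemma no_decide_nhalts:
  assumes "computable_real_seq y" "0 \<le> l" "l < u"
    "\<And>k. \<not> halts k \<Longrightarrow> y k \<ge> u" "\<And>k. halts k \<Longrightarrow> y k \<le> l"
  shows False
  using no_decide[of y l u "\<lambda>k. \<not> halts k"] assms not_rec_nhalts by blast


definition Tm :: "nat \<Rightarrow> nat" where "Tm k = (LEAST t. H k t)"
definition xseq :: "nat \<Rightarrow> nat \<Rightarrow> real" where
  "xseq M k = (if halts k then 1 / (real M * 2 ^ Tm k) else 0)"

lemma H_Tm: "halts k \<Longrightarrow> H k t \<longleftrightarrow> Tm k \<le> t"
proof -
  assume "halts k"
  then have h: "H k (Tm k)" unfolding halts_def Tm_def by (rule LeastI_ex)
  show ?thesis
  proof
    assume "H k t" then show "Tm k \<le> t" unfolding Tm_def by (rule Least_le)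
  next
    assume "Tm k \<le> t" then show "H k t" using H_mono[OF h] by blast
  qed
qed

lemma nhalts_H: "\<not> halts k \<Longrightarrow> \<not> H k t"
  unfolding halts_def by blast

lemma cnt_Tm:
  assumes "halts k" "H k j"
  shows "(\<Sum>t<j. if H k t then 0 else 1) = Tm k"
proof -
  have tj: "Tm k \<le> j" using assms H_Tm by blast
  have "(\<Sum>t<j. if H k t then 0 else (1::nat)) = (\<Sum>t<j. if t < Tm k then 1 else 0)"
    using H_Tm[OF assms(1)] by (intro sum.cong) auto
  also have "\<dots> = card {t \<in> {..<j}. t < Tm k}"
    by (simp add: sum.inter_filter[symmetric])
  also have "{t \<in> {..<j}. t < Tm k} = {..<Tm k}" using tj by auto
  finally show ?thesis by simp
qed

lemma rp_H2: "recfn n F \<Longrightarrow> recfn n G \<Longrightarrow> recpred n (\<lambda>e. H (F e) (G e))"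
  by (rule rp_comp2[OF rp_H])

lemma computable_xseq:
  assumes M: "M \<ge> 1"
  shows "computable_real_seq (xseq M)"
proof -
  define a where "a k j = (if H k j then 1 else 0::nat)" for k j
  define b where "b k j = M * 2 ^ (\<Sum>t<j. if H k t then 0 else 1::nat)" for k j
  define s where "s (k::nat) (j::nat) = (0::nat)" for k j
  define r where "r k j = (-1) ^ (s k j) * of_nat (a k j) / (of_nat (b k j) :: rat)" for k j
  have ra: "recursive2 a" unfolding recursive2_iff a_def using rp_H unfolding recpred_def .
  have rb: "recursive2 b" unfolding recursive2_iff b_def
    by (intro rf_rules rp_H2) simp_all
  have rs: "recursive2 s" unfolding recursive2_iff s_def by (rule rf_const)
  have "computable_rat_dseq r" unfolding computable_rat_dseq_def
    using ra rb rs M by (intro exI[of _ a] exI[of _ b] exI[of _ s]) (auto simp: r_def b_def)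
  moreover have "\<bar>of_rat (r k j) - xseq M k\<bar> \<le> (1/2) ^ j" for k j
  proof (cases "H k j")
    case True
    then have hk: "halts k" unfolding halts_def by blast
    have "of_rat (r k j) = xseq M k"
      using True hk cnt_Tm[OF hk True]
      by (simp add: r_def a_def b_def s_def xseq_def of_rat_divide of_rat_mult of_rat_power)
    then show ?thesis by simp
  next
    case False
    then have r0: "r k j = 0" by (simp add: r_def a_def)
    show ?thesis
    proof (cases "halts k")
      case True
      then have "Tm k > j" using False H_Tm by (meson not_le)
      have "xseq M k = 1 / (real M * 2 ^ Tm k)" using True by (simp add: xseq_def)
      also have "\<dots> \<le> 1 / 2 ^ Tm k" using M by (intro divide_left_mono) auto
      also have "\<dots> \<le> 1 / 2 ^ j" using \<open>Tm k > j\<close> by (intro divide_left_mono power_increasing) auto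
      finally show ?thesis using r0 by (simp add: power_one_over xseq_def)
    next
      case False
      then show ?thesis using r0 by (simp add: xseq_def)
    qed
  qed
  ultimately show ?thesis unfolding computable_real_seq_def by blast
qed

lemma computable_const_nat: "computable_real_seq (\<lambda>k. real c)"
proof -
  define r where "r (k::nat) (j::nat) = (-1) ^ (0::nat) * of_nat c / (of_nat (1::nat) :: rat)" for k j
  have "computable_rat_dseq r" unfolding computable_rat_dseq_def r_def
    by (intro exI[of _ "\<lambda>k j. c"] exI[of _ "\<lambda>k j. 1"] exI[of _ "\<lambda>k j. 0"])
       (auto simp: recursive2_iff intro: rf_const)
  moreover have "\<bar>of_rat (r k j) - real c\<bar> \<le> (1/2) ^ j" for k j by (simp add: r_def)
  ultimately show ?thesis unfolding computable_real_seq_def by blast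
qed

lemma computable_const0: "computable_real_seq (\<lambda>k. 0)"
  using computable_const_nat[of 0] by simp
lemma computable_const1: "computable_real_seq (\<lambda>k. 1)"
  using computable_const_nat[of 1] by simp

lemma xseq_nonneg: "xseq M k \<ge> 0" by (simp add: xseq_def)
lemma xseq_le1: "M \<ge> 1 \<Longrightarrow> xseq M k \<le> 1"
proof -
  assume M: "M \<ge> 1"
  have "real M * 2 ^ Tm k \<ge> 1" using M by (metis mult_ge1_I of_nat_1 of_nat_le_iff one_le_power one_le_numeral)
  then show ?thesis by (simp add: xseq_def)
qed
lemma xseq_halts: "M \<ge> 1 \<Longrightarrow> halts k \<Longrightarrow> inverse (xseq M k) \<ge> real M"
proof -
  assume M: "M \<ge> 1" and h: "halts k"
  have "inverse (xseq M k) = real M * 2 ^ Tm k" using h by (simp add: xseq_def)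
  also have "\<dots> \<ge> real M * 1" by (intro mult_left_mono) auto
  finally show ?thesis by simp
qed
lemma xseq_nhalts: "\<not> halts k \<Longrightarrow> xseq M k = 0" by (simp add: xseq_def)


lemma sum_two:
  fixes f :: "'a::finite \<Rightarrow> 'b::comm_monoid_add"
  assumes "a \<noteq> b" "\<And>j. j \<noteq> a \<Longrightarrow> j \<noteq> b \<Longrightarrow> f j = 0"
  shows "sum f UNIV = f a + f b"
proof -
  have "sum f UNIV = sum f {a, b}" using assms(2) by (intro sum.mono_neutral_right) auto
  then show ?thesis using assms(1) by simp
qed

lemma sum_one:
  fixes f :: "'a::finite \<Rightarrow> 'b::comm_monoid_add"
  assumes "\<And>j. j \<noteq> a \<Longrightarrow> f j = 0"
  shows "sum f UNIV = f a"
proof -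
  have "sum f UNIV = sum f {a}" using assms by (intro sum.mono_neutral_right) auto
  then show ?thesis by simp
qed

lemma cadjoint_mult: "cadjoint (A ** B) = cadjoint B ** cadjoint A"
  by (simp add: cadjoint_def matrix_matrix_mult_def vec_eq_iff cnj_sum mult.commute)

lemma cadjoint_cadjoint[simp]: "cadjoint (cadjoint A) = A"
  by (simp add: cadjoint_def vec_eq_iff)

lemma pinv_unique:
  fixes A :: "complex ^ 'n ^ 'm"
  assumes X: "A ** X ** A = A" "X ** A ** X = X" "cadjoint (A ** X) = A ** X" "cadjoint (X ** A) = X ** A"
    and Y: "A ** Y ** A = A" "Y ** A ** Y = Y" "cadjoint (A ** Y) = A ** Y" "cadjoint (Y ** A) = Y ** A"
  shows "X = Y"
proof -
  have "X = X ** (A ** X)" using X(2) by (simp add: matrix_mul_assoc)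
  also have "\<dots> = X ** cadjoint (A ** X)" using X(3) by simp
  also have "\<dots> = X ** (cadjoint X ** cadjoint (A ** Y ** A))" using Y(1) by (simp add: cadjoint_mult)
  also have "\<dots> = X ** (cadjoint X ** (cadjoint A ** cadjoint (A ** Y)))"
    by (simp add: cadjoint_mult matrix_mul_assoc)
  also have "\<dots> = X ** (cadjoint (A ** X) ** (A ** Y))" using Y(3)
    by (simp add: cadjoint_mult matrix_mul_assoc)
  also have "\<dots> = (X ** A ** X) ** A ** Y" using X(3) by (simp add: matrix_mul_assoc)
  also have "\<dots> = X ** A ** Y" using X(2) by simp
  finally have 1: "X = X ** A ** Y" .
  have "Y = (Y ** A) ** Y" using Y(2) by simp
  also have "\<dots> = cadjoint (Y ** A) ** Y" using Y(4) by simp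
  also have "\<dots> = (cadjoint (A ** X ** A) ** cadjoint Y) ** Y" using X(1) by (simp add: cadjoint_mult)
  also have "\<dots> = (cadjoint (X ** A) ** cadjoint A ** cadjoint Y) ** Y"
    by (simp add: cadjoint_mult matrix_mul_assoc)
  also have "\<dots> = ((X ** A) ** cadjoint (Y ** A)) ** Y" using X(4)
    by (simp add: cadjoint_mult matrix_mul_assoc)
  also have "\<dots> = X ** A ** (Y ** A ** Y)" using Y(4) by (simp add: matrix_mul_assoc)
  also have "\<dots> = X ** A ** Y" using Y(2) by simp
  finally show ?thesis using 1 by simp
qed

lemma pinv_eq:
  fixes A :: "complex ^ 'n ^ 'm"
  assumes "A ** X ** A = A" "X ** A ** X = X" "cadjoint (A ** X) = A ** X" "cadjoint (X ** A) = X ** A"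
  shows "pinv A = X"
  unfolding pinv_def
  by (rule the_equality) (use assms pinv_unique in blast)+

definition Amat :: "'m \<Rightarrow> 'm \<Rightarrow> 'n \<Rightarrow> 'n \<Rightarrow> complex \<Rightarrow> complex ^ 'n ^ 'm" where
  "Amat i1 i2 j1 j2 c = (\<chi> i j. if i = i1 \<and> j = j1 then 1 else if i = i2 \<and> j = j2 then c else 0)"
definition Xmat :: "'m \<Rightarrow> 'm \<Rightarrow> 'n \<Rightarrow> 'n \<Rightarrow> complex \<Rightarrow> complex ^ 'm ^ 'n" where
  "Xmat i1 i2 j1 j2 d = (\<chi> j i. if j = j1 \<and> i = i1 then 1 else if j = j2 \<and> i = i2 then d else 0)"
definition Dm :: "'a::finite \<Rightarrow> 'a \<Rightarrow> complex \<Rightarrow> complex ^ 'a ^ 'a" where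
  "Dm a b r = (\<chi> i i'. if i = a \<and> i' = a then 1 else if i = b \<and> i' = b then r else 0)"

context
  fixes i1 i2 :: "'m::finite" and j1 j2 :: "'n::finite"
  assumes i12: "i1 \<noteq> i2" and j12: "j1 \<noteq> j2"
begin

lemma AX: "Amat i1 i2 j1 j2 c ** Xmat i1 i2 j1 j2 d = Dm i1 i2 (c * d)"
  unfolding vec_eq_iff matrix_matrix_mult_def Amat_def Xmat_def Dm_def
proof (intro allI)
  fix i i'
  show "(\<chi> i j. \<Sum>k\<in>UNIV. (\<chi> i j. if i = i1 \<and> j = j1 then 1 else if i = i2 \<and> j = j2 then c else 0) $ i $ k *
            (\<chi> j i. if j = j1 \<and> i = i1 then 1 else if j = j2 \<and> i = i2 then d else 0) $ k $ j) $ i $ i' =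
       (\<chi> i i'. if i = i1 \<and> i' = i1 then 1 else if i = i2 \<and> i' = i2 then c * d else 0) $ i $ i'"
    using i12 j12 by (simp add: sum_two[OF j12])
qed

lemma XA: "Xmat i1 i2 j1 j2 d ** Amat i1 i2 j1 j2 c = Dm j1 j2 (d * c)"
  unfolding vec_eq_iff matrix_matrix_mult_def Amat_def Xmat_def Dm_def
  using i12 j12 by (simp add: sum_two[OF i12])

lemma DA: "Dm i1 i2 r ** Amat i1 i2 j1 j2 c = Amat i1 i2 j1 j2 (r * c)"
  unfolding vec_eq_iff matrix_matrix_mult_def Amat_def Dm_def
  using i12 j12 by (simp add: sum_two[OF i12])

lemma DX: "Dm j1 j2 r ** Xmat i1 i2 j1 j2 d = Xmat i1 i2 j1 j2 (r * d)"
  unfolding vec_eq_iff matrix_matrix_mult_def Xmat_def Dm_def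
  using i12 j12 by (simp add: sum_two[OF j12])

end

lemma Dm_herm: "cnj r = r \<Longrightarrow> a \<noteq> b \<Longrightarrow> cadjoint (Dm a b r) = Dm a b r"
  unfolding cadjoint_def Dm_def vec_eq_iff by auto

lemma cnj_inv_prod: "cnj (c * inverse c) = c * inverse c"
  by (cases "c = 0") simp_all

lemma pinv_Amat:
  assumes i12: "(i1::'m::finite) \<noteq> i2" and j12: "(j1::'n::finite) \<noteq> j2"
  shows "pinv (Amat i1 i2 j1 j2 c) = Xmat i1 i2 j1 j2 (inverse c)"
proof (rule pinv_eq)
  have e1: "c * inverse c * c = c" by (cases "c = 0") simp_all
  have e2: "inverse c * c * inverse c = inverse c" by (cases "c = 0") simp_all
  show "Amat i1 i2 j1 j2 c ** Xmat i1 i2 j1 j2 (inverse c) ** Amat i1 i2 j1 j2 c = Amat i1 i2 j1 j2 c"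
    by (simp only: AX[OF i12 j12] DA[OF i12 j12] e1)
  show "Xmat i1 i2 j1 j2 (inverse c) ** Amat i1 i2 j1 j2 c ** Xmat i1 i2 j1 j2 (inverse c) = Xmat i1 i2 j1 j2 (inverse c)"
    by (simp only: XA[OF i12 j12] DX[OF i12 j12] e2)
  show "cadjoint (Amat i1 i2 j1 j2 c ** Xmat i1 i2 j1 j2 (inverse c)) = Amat i1 i2 j1 j2 c ** Xmat i1 i2 j1 j2 (inverse c)"
    using AX[OF i12 j12] Dm_herm[OF cnj_inv_prod i12] by simp
  show "cadjoint (Xmat i1 i2 j1 j2 (inverse c) ** Amat i1 i2 j1 j2 c) = Xmat i1 i2 j1 j2 (inverse c) ** Amat i1 i2 j1 j2 c"
    using XA[OF i12 j12] Dm_herm[OF _ j12, of "inverse c * c"] cnj_inv_prod[of c] by (simp add: mult.commute)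
qed

definition unitv :: "'a::finite \<Rightarrow> complex ^ 'a" where "unitv a = (\<chi> i. if i = a then 1 else 0)"

lemma norm_single:
  fixes v :: "complex ^ 'a::finite"
  assumes "\<And>i. i \<noteq> a \<Longrightarrow> v $ i = 0"
  shows "norm v = cmod (v $ a)"
proof -
  have "norm v = sqrt (\<Sum>i\<in>UNIV. (norm (v $ i))^2)" unfolding norm_vec_def L2_set_def by simp
  also have "(\<Sum>i\<in>UNIV. (norm (v $ i))^2) = (norm (v $ a))^2" using assms by (intro sum_one) auto
  finally show ?thesis by simp
qed

lemma norm_unitv: "norm (unitv a) = 1"
  by (subst norm_single[where a=a]) (auto simp: unitv_def)

lemma entry_le_frob: "cmod (M $ i $ j) \<le> frob_norm M"
proof -
  have "(cmod (M $ i $ j))^2 \<le> (\<Sum>j'\<in>UNIV. (cmod (M $ i $ j'))^2)"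
    by (rule member_le_sum) auto
  also have "\<dots> \<le> (\<Sum>i'\<in>UNIV. \<Sum>j'\<in>UNIV. (cmod (M $ i' $ j'))^2)"
    by (rule member_le_sum[where f="\<lambda>i'. \<Sum>j'\<in>UNIV. (cmod (M $ i' $ j'))^2"]) (auto intro: sum_nonneg)
  finally show ?thesis unfolding frob_norm_def by (simp add: real_le_rsqrt)
qed

context
  fixes i1 i2 :: "'m::finite" and j1 j2 :: "'n::finite"
  assumes i12: "i1 \<noteq> i2" and j12: "j1 \<noteq> j2"
begin

lemma frob_Amat: "frob_norm (Amat i1 i2 j1 j2 c) = sqrt (1 + (cmod c)^2)"
proof -
  have "(\<Sum>j\<in>UNIV. (cmod (Amat i1 i2 j1 j2 c $ i $ j))^2) =
        (if i = i1 then 1 else if i = i2 then (cmod c)^2 else 0)" for i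
    using i12 j12 by (simp add: Amat_def sum_two[OF j12])
  then show ?thesis unfolding frob_norm_def using i12 by (simp add: sum_two[OF i12])
qed

lemma frob_Xmat: "frob_norm (Xmat i1 i2 j1 j2 d) = sqrt (1 + (cmod d)^2)"
proof -
  have "(\<Sum>i\<in>UNIV. (cmod (Xmat i1 i2 j1 j2 d $ j $ i))^2) =
        (if j = j1 then 1 else if j = j2 then (cmod d)^2 else 0)" for j
    using i12 j12 by (simp add: Xmat_def sum_two[OF i12])
  then show ?thesis unfolding frob_norm_def using j12 by (simp add: sum_two[OF j12])
qed

lemma Xmat_entry: "Xmat i1 i2 j1 j2 d $ j2 $ i2 = d"
  using i12 j12 by (simp add: Xmat_def)

lemma Xmat_ev: "Xmat i1 i2 j1 j2 d *v unitv i2 = (\<chi> j. if j = j2 then d else 0)"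
  unfolding vec_eq_iff matrix_vector_mult_def Xmat_def unitv_def
  using i12 j12 by (simp add: sum_one[where a=i2])

lemma norm_Xmat_ev: "norm (Xmat i1 i2 j1 j2 d *v unitv i2) = cmod d"
  unfolding Xmat_ev by (subst norm_single[where a=j2]) auto

lemma resid_nz:
  assumes "c \<noteq> 0"
  shows "(INF x :: complex ^ 'n. norm (Amat i1 i2 j1 j2 c *v x - unitv i2)) = 0"
proof -
  define x0 :: "complex ^ 'n" where "x0 = (\<chi> j. if j = j2 then inverse c else 0)"
  have "Amat i1 i2 j1 j2 c *v x0 = unitv i2"
    unfolding vec_eq_iff matrix_vector_mult_def Amat_def x0_def unitv_def
    using i12 j12 assms by (simp add: sum_one[where a=j2])
  then have "(INF x :: complex ^ 'n. norm (Amat i1 i2 j1 j2 c *v x - unitv i2)) \<le> 0"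
    by (intro cINF_lower2[where x=x0]) (auto intro: bdd_belowI[of _ 0])
  moreover have "(INF x :: complex ^ 'n. norm (Amat i1 i2 j1 j2 c *v x - unitv i2)) \<ge> 0"
    by (intro cINF_greatest) auto
  ultimately show ?thesis by simp
qed

lemma resid_z: "(INF x :: complex ^ 'n. norm (Amat i1 i2 j1 j2 0 *v x - unitv i2)) = 1"
proof -
  have c2: "(Amat i1 i2 j1 j2 0 *v x - unitv i2) $ i2 = -1" for x :: "complex ^ 'n"
    unfolding matrix_vector_mult_def Amat_def unitv_def using i12 j12 by simp
  have ge: "norm (Amat i1 i2 j1 j2 0 *v x - unitv i2) \<ge> 1" for x :: "complex ^ 'n"
  proof -
    have "norm ((Amat i1 i2 j1 j2 0 *v x - unitv i2) $ i2) \<le> norm (Amat i1 i2 j1 j2 0 *v x - unitv i2)"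
      by (rule Finite_Cartesian_Product.norm_nth_le)
    then show ?thesis using c2[of x] by simp
  qed
  have "norm (Amat i1 i2 j1 j2 0 *v 0 - unitv i2) = 1" by (simp add: norm_unitv)
  then have "(INF x :: complex ^ 'n. norm (Amat i1 i2 j1 j2 0 *v x - unitv i2)) \<le> 1"
    by (intro cINF_lower2[where x=0]) (auto intro: bdd_belowI[of _ 0])
  moreover have "(INF x :: complex ^ 'n. norm (Amat i1 i2 j1 j2 0 *v x - unitv i2)) \<ge> 1"
    using ge by (intro cINF_greatest) auto
  ultimately show ?thesis by simp
qed

end


lemma two_elems:
  assumes "CARD('a::finite) \<ge> 2"
  shows "\<exists>a b :: 'a. a \<noteq> b"
proof (rule ccontr)
  assume "\<not> (\<exists>a b :: 'a. a \<noteq> b)"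
  then have "\<And>a b :: 'a. a = b" by blast
  then have "(UNIV :: 'a set) = {undefined}" by auto
  then have "CARD('a) = card {undefined :: 'a}" by (rule arg_cong)
  then have "CARD('a) = 1" by simp
  then show False using assms by simp
qed

lemma ccs_of_real: "computable_real_seq y \<Longrightarrow> computable_complex_seq (\<lambda>k. complex_of_real (y k))"
  unfolding computable_complex_seq_def using computable_const0 by simp

lemma ccs_Re: "computable_complex_seq z \<Longrightarrow> computable_real_seq (\<lambda>k. Re (z k))"
  unfolding computable_complex_seq_def by simp

lemma comp_Aseq:
  assumes M: "M \<ge> 1"
  shows "computable_mat_seq (\<lambda>k. Amat i1 i2 j1 j2 (complex_of_real (xseq M k)))"
  unfolding computable_mat_seq_def
proof (intro allI)
  fix i j
  have e: "(\<lambda>k. Amat i1 i2 j1 j2 (complex_of_real (xseq M k)) $ i $ j) =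
      (\<lambda>k. complex_of_real (if i = i1 \<and> j = j1 then 1 else if i = i2 \<and> j = j2 then xseq M k else 0))"
    by (auto simp: Amat_def)
  have e2: "(\<lambda>k. if i = i1 \<and> j = j1 then 1 else if i = i2 \<and> j = j2 then xseq M k else 0) =
     (if i = i1 \<and> j = j1 then (\<lambda>k. 1) else if i = i2 \<and> j = j2 then xseq M else (\<lambda>k. 0))"
    by auto
  have "computable_real_seq (\<lambda>k. if i = i1 \<and> j = j1 then 1 else if i = i2 \<and> j = j2 then xseq M k else 0)"
    unfolding e2 using computable_const0 computable_const1 computable_xseq[OF M] by simp
  then show "computable_complex_seq (\<lambda>k. Amat i1 i2 j1 j2 (complex_of_real (xseq M k)) $ i $ j)"
    unfolding e by (rule ccs_of_real)
qed

lemma comp_unitv: "computable_vec_seq (\<lambda>k. unitv a)"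
  unfolding computable_vec_seq_def
proof (intro allI)
  fix i
  have e: "(\<lambda>k. unitv a $ i) = (\<lambda>k. complex_of_real (if i = a then 1 else 0))"
    by (auto simp: unitv_def)
  have "computable_real_seq (\<lambda>k::nat. if i = a then 1 else 0)"
    using computable_const0 computable_const1 by auto
  then show "computable_complex_seq (\<lambda>k. unitv a $ i)" unfolding e by (rule ccs_of_real)
qed

lemma frob_nonneg: "frob_norm A \<ge> 0"
  unfolding frob_norm_def by (intro real_sqrt_ge_zero sum_nonneg) auto

lemma final_contra:
  assumes "computable_real_seq y" "0 \<le> C" "real M \<ge> 2 * C + 3"
    "\<And>k. halts k \<Longrightarrow> y k \<ge> real M - C" "\<And>k. \<not> halts k \<Longrightarrow> y k \<le> 1 + C"
  shows False
  using no_decide_halts[of y "1 + C" "real M - C"] assms by auto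

lemma choose_M: "0 \<le> (C::real) \<Longrightarrow> \<exists>M::nat. M \<ge> 1 \<and> real M \<ge> 2 * C + 3"
proof -
  assume "0 \<le> C"
  obtain M :: nat where "real M \<ge> 2 * C + 3" using real_arch_simple by blast
  moreover have "real M \<ge> 1" using \<open>real M \<ge> 2 * C + 3\<close> \<open>0 \<le> C\<close> by linarith
  ultimately show ?thesis by (intro exI[of _ M]) auto
qed

lemma xseq_pos: "M \<ge> 1 \<Longrightarrow> halts k \<Longrightarrow> xseq M k > 0"
  by (simp add: xseq_def)

lemma sqrt_ge: "sqrt (1 + t^2) \<ge> \<bar>t\<bar>"
  by (simp add: real_le_rsqrt)

lemma frob_zero: "frob_norm (0 :: complex ^ 'n ^ 'm) = 0"
  unfolding frob_norm_def by simp

context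
  fixes i1 i2 :: "'m::finite" and j1 j2 :: "'n::finite"
  assumes i12: "i1 \<noteq> i2" and j12: "j1 \<noteq> j2"
begin

definition AS :: "nat \<Rightarrow> nat \<Rightarrow> complex ^ 'n ^ 'm" where
  "AS M k = Amat i1 i2 j1 j2 (complex_of_real (xseq M k))"

lemma AS_comp: "M \<ge> 1 \<Longrightarrow> computable_mat_seq (AS M)"
  unfolding AS_def[abs_def] by (rule comp_Aseq)

lemma AS_frob: "frob_norm (AS M k) = sqrt (1 + (xseq M k)^2)"
  unfolding AS_def frob_Amat[OF i12 j12] by simp

lemma AS_small: "M \<ge> 1 \<Longrightarrow> frob_norm (AS M k) \<le> sqrt 2"
proof -
  assume M: "M \<ge> 1"
  have "(xseq M k)^2 \<le> 1" using xseq_nonneg[of M k] xseq_le1[OF M, of k]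
    by (intro power_le_one)
  then show ?thesis unfolding AS_frob by simp
qed

lemma AS_pinv: "pinv (AS M k) = Xmat i1 i2 j1 j2 (complex_of_real (inverse (xseq M k)))"
  unfolding AS_def pinv_Amat[OF i12 j12] by (simp add: of_real_inverse)

lemma unitv_small: "norm (unitv (a::'a::finite)) \<le> sqrt 2"
  using norm_unitv[of a] by simp

lemma frob_pinv_AS: "frob_norm (pinv (AS M k)) = sqrt (1 + (inverse (xseq M k))^2)"
  unfolding AS_pinv frob_Xmat[OF i12 j12] using xseq_nonneg[of M k] by (simp del: of_real_inverse)

lemma part1:
  fixes g :: "complex ^ 'n ^ 'm \<Rightarrow> complex ^ 'm ^ 'n"
  assumes C: "\<forall>A. frob_norm A \<le> sqrt 2 \<longrightarrow> frob_norm (pinv A - g A) \<le> C"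
  shows "\<not> BM_computable_mat_mat g"
proof
  assume bm: "BM_computable_mat_mat g"
  have C0: "0 \<le> C" using C[rule_format, of 0] frob_nonneg[of "pinv 0 - g 0"] by (simp add: frob_zero)
  obtain M where M: "M \<ge> 1" "real M \<ge> 2 * C + 3" using choose_M[OF C0] by blast
  define y where "y k = Re (g (AS M k) $ j2 $ i2)" for k
  have "computable_mat_seq (\<lambda>k. g (AS M k))" using bm AS_comp[OF M(1)] unfolding BM_computable_mat_mat_def by blast
  then have "computable_complex_seq (\<lambda>k. g (AS M k) $ j2 $ i2)" unfolding computable_mat_seq_def by blast
  then have cy: "computable_real_seq y" unfolding y_def by (rule ccs_Re)
  have bd: "\<bar>inverse (xseq M k) - y k\<bar> \<le> C" for k
  proof -
    have "\<bar>Re ((pinv (AS M k) - g (AS M k)) $ j2 $ i2)\<bar> \<le> cmod ((pinv (AS M k) - g (AS M k)) $ j2 $ i2)"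
      by (rule abs_Re_le_cmod)
    also have "\<dots> \<le> frob_norm (pinv (AS M k) - g (AS M k))" by (rule entry_le_frob)
    also have "\<dots> \<le> C" using C AS_small[OF M(1)] by blast
    finally show ?thesis unfolding y_def AS_pinv by (simp add: Xmat_entry[OF i12 j12] del: of_real_inverse)
  qed
  show False
  proof (rule final_contra[OF cy C0 M(2)])
    fix k assume "halts k"
    then show "y k \<ge> real M - C" using xseq_halts[OF M(1)] bd[of k] by fastforce
  next
    fix k assume "\<not> halts k"
    then show "y k \<le> 1 + C" using xseq_nhalts[of k M] bd[of k] by simp
  qed
qed

lemma part2:
  fixes g :: "complex ^ 'n ^ 'm \<Rightarrow> real"
  assumes C: "\<forall>A. frob_norm A \<le> sqrt 2 \<longrightarrow> \<bar>frob_norm (pinv A) - g A\<bar> \<le> C"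
  shows "\<not> BM_computable_mat_real g"
proof
  assume bm: "BM_computable_mat_real g"
  have C0: "0 \<le> C" using C[rule_format, of 0] by (simp add: frob_zero)
  obtain M where M: "M \<ge> 1" "real M \<ge> 2 * C + 3" using choose_M[OF C0] by blast
  define y where "y k = g (AS M k)" for k
  have cy: "computable_real_seq y" using bm AS_comp[OF M(1)] unfolding BM_computable_mat_real_def y_def by blast
  have bd: "\<bar>sqrt (1 + (inverse (xseq M k))^2) - y k\<bar> \<le> C" for k
    using C AS_small[OF M(1), of k] unfolding y_def frob_pinv_AS[symmetric] by blast
  show False
  proof (rule final_contra[OF cy C0 M(2)])
    fix k assume "halts k"
    then have "inverse (xseq M k) \<ge> real M" by (rule xseq_halts[OF M(1)])
    moreover have "sqrt (1 + (inverse (xseq M k))^2) \<ge> inverse (xseq M k)"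
      using sqrt_ge[of "inverse (xseq M k)"] abs_ge_self[of "inverse (xseq M k)"] by linarith
    ultimately show "y k \<ge> real M - C" using bd[of k] by linarith
  next
    fix k assume "\<not> halts k"
    then show "y k \<le> 1 + C" using xseq_nhalts[of k M] bd[of k] by simp
  qed
qed

lemma part3:
  fixes \<Psi> :: "complex ^ 'n ^ 'm \<Rightarrow> complex ^ 'm \<Rightarrow> real"
  assumes c: "c < 1/4" "\<forall>A b. frob_norm A \<le> sqrt 2 \<longrightarrow> norm b \<le> sqrt 2 \<longrightarrow>
            \<bar>(INF x :: complex ^ 'n. norm (A *v x - b)) - \<Psi> A b\<bar> \<le> c"
  shows "\<not> BM_computable_matvec_real \<Psi>"
proof
  assume bm: "BM_computable_matvec_real \<Psi>"
  have c0: "0 \<le> c" using c(2)[rule_format, of 0 0] by (simp add: frob_zero)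
  define y where "y k = \<Psi> (AS 1 k) (unitv i2)" for k
  have cy: "computable_real_seq y" using bm AS_comp[of 1] comp_unitv[of i2]
    unfolding BM_computable_matvec_real_def y_def by blast
  have bd: "\<bar>(INF x :: complex ^ 'n. norm (AS 1 k *v x - unitv i2)) - y k\<bar> \<le> c" for k
    using c(2) AS_small[of 1 k] unitv_small[of i2] unfolding y_def by simp
  show False
  proof (rule no_decide_nhalts[OF cy c0, of "1 - c"])
    show "c < 1 - c" using c(1) by simp
  next
    fix k assume h: "halts k"
    then have "complex_of_real (xseq 1 k) \<noteq> 0" using xseq_pos[of 1 k] by simp
    then have "(INF x :: complex ^ 'n. norm (AS 1 k *v x - unitv i2)) = 0"
      unfolding AS_def by (rule resid_nz[OF i12 j12])
    then show "y k \<le> c" using bd[of k] by simp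
  next
    fix k assume h: "\<not> halts k"
    then have "(INF x :: complex ^ 'n. norm (AS 1 k *v x - unitv i2)) = 1"
      unfolding AS_def using resid_z[OF i12 j12] xseq_nhalts[OF h] by simp
    then show "y k \<ge> 1 - c" using bd[of k] by simp
  qed
qed

lemma AS_pinv_unitv: "pinv (AS M k) *v unitv i2 = (\<chi> j. if j = j2 then complex_of_real (inverse (xseq M k)) else 0)"
  unfolding AS_pinv by (rule Xmat_ev[OF i12 j12])

lemma norm_AS_pinv_unitv: "norm (pinv (AS M k) *v unitv i2) = inverse (xseq M k)"
  unfolding AS_pinv norm_Xmat_ev[OF i12 j12] using xseq_nonneg[of M k] by (simp add: norm_inverse)

lemma part4:
  fixes \<Psi> :: "complex ^ 'n ^ 'm \<Rightarrow> complex ^ 'm \<Rightarrow> complex ^ 'n"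
  assumes C: "\<forall>A b. frob_norm A \<le> sqrt 2 \<longrightarrow> norm b \<le> sqrt 2 \<longrightarrow> norm (pinv A *v b - \<Psi> A b) \<le> C"
  shows "\<not> BM_computable_matvec_vec \<Psi>"
proof
  assume bm: "BM_computable_matvec_vec \<Psi>"
  have "norm (pinv 0 *v 0 - \<Psi> 0 0) \<le> C" using C[rule_format, of 0 0] by (simp add: frob_zero)
  then have C0: "0 \<le> C" using norm_ge_zero order.trans by blast
  obtain M where M: "M \<ge> 1" "real M \<ge> 2 * C + 3" using choose_M[OF C0] by blast
  define y where "y k = Re (\<Psi> (AS M k) (unitv i2) $ j2)" for k
  have "computable_vec_seq (\<lambda>k. \<Psi> (AS M k) (unitv i2))"
    using bm AS_comp[OF M(1)] comp_unitv[of i2] unfolding BM_computable_matvec_vec_def by blast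
  then have "computable_complex_seq (\<lambda>k. \<Psi> (AS M k) (unitv i2) $ j2)" unfolding computable_vec_seq_def by blast
  then have cy: "computable_real_seq y" unfolding y_def by (rule ccs_Re)
  have bd: "\<bar>inverse (xseq M k) - y k\<bar> \<le> C" for k
  proof -
    have "\<bar>Re ((pinv (AS M k) *v unitv i2 - \<Psi> (AS M k) (unitv i2)) $ j2)\<bar> \<le> cmod ((pinv (AS M k) *v unitv i2 - \<Psi> (AS M k) (unitv i2)) $ j2)"
      by (rule abs_Re_le_cmod)
    also have "\<dots> \<le> norm (pinv (AS M k) *v unitv i2 - \<Psi> (AS M k) (unitv i2))"
      by (rule Finite_Cartesian_Product.norm_nth_le)
    also have "\<dots> \<le> C" using C AS_small[OF M(1)] unitv_small[of i2] by blast
    finally show ?thesis unfolding y_def AS_pinv_unitv by (simp del: of_real_inverse)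
  qed
  show False
  proof (rule final_contra[OF cy C0 M(2)])
    fix k assume "halts k"
    then show "y k \<ge> real M - C" using xseq_halts[OF M(1)] bd[of k] by fastforce
  next
    fix k assume "\<not> halts k"
    then show "y k \<le> 1 + C" using xseq_nhalts[of k M] bd[of k] by simp
  qed
qed

lemma part5:
  fixes \<Psi> :: "complex ^ 'n ^ 'm \<Rightarrow> complex ^ 'm \<Rightarrow> real"
  assumes C: "\<forall>A b. frob_norm A \<le> sqrt 2 \<longrightarrow> norm b \<le> sqrt 2 \<longrightarrow> \<bar>norm (pinv A *v b) - \<Psi> A b\<bar> \<le> C"
  shows "\<not> BM_computable_matvec_real \<Psi>"
proof
  assume bm: "BM_computable_matvec_real \<Psi>"
  have C0: "0 \<le> C" using C[rule_format, of 0 0] by (simp add: frob_zero)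
  obtain M where M: "M \<ge> 1" "real M \<ge> 2 * C + 3" using choose_M[OF C0] by blast
  define y where "y k = \<Psi> (AS M k) (unitv i2)" for k
  have cy: "computable_real_seq y" using bm AS_comp[OF M(1)] comp_unitv[of i2]
    unfolding BM_computable_matvec_real_def y_def by blast
  have bd: "\<bar>inverse (xseq M k) - y k\<bar> \<le> C" for k
    using C AS_small[OF M(1), of k] unitv_small[of i2] unfolding y_def norm_AS_pinv_unitv[symmetric] by blast
  show False
  proof (rule final_contra[OF cy C0 M(2)])
    fix k assume "halts k"
    then show "y k \<ge> real M - C" using xseq_halts[OF M(1)] bd[of k] by fastforce
  next
    fix k assume "\<not> halts k"
    then show "y k \<le> 1 + C" using xseq_nhalts[of k M] bd[of k] by simp
  qed
qed

lemma part6: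
  fixes \<kappa> :: "complex ^ 'n ^ 'm \<Rightarrow> real"
  assumes C: "\<forall>A. frob_norm A \<le> sqrt 2 \<longrightarrow> \<bar>frob_norm A * frob_norm (pinv A) - \<kappa> A\<bar> \<le> C"
  shows "\<not> BM_computable_mat_real \<kappa>"
proof
  assume bm: "BM_computable_mat_real \<kappa>"
  have C0: "0 \<le> C" using C[rule_format, of 0] by (simp add: frob_zero)
  obtain M where M: "M \<ge> 1" "real M \<ge> 2 * C + 3" using choose_M[OF C0] by blast
  define y where "y k = \<kappa> (AS M k)" for k
  have cy: "computable_real_seq y" using bm AS_comp[OF M(1)] unfolding BM_computable_mat_real_def y_def by blast
  have bd: "\<bar>sqrt (1 + (xseq M k)^2) * sqrt (1 + (inverse (xseq M k))^2) - y k\<bar> \<le> C" for k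
    using C AS_small[OF M(1), of k] unfolding y_def frob_pinv_AS[symmetric] AS_frob[symmetric] by blast
  show False
  proof (rule final_contra[OF cy C0 M(2)])
    fix k assume "halts k"
    then have "inverse (xseq M k) \<ge> real M" by (rule xseq_halts[OF M(1)])
    moreover have "sqrt (1 + (inverse (xseq M k))^2) \<ge> inverse (xseq M k)"
      using sqrt_ge[of "inverse (xseq M k)"] abs_ge_self[of "inverse (xseq M k)"] by linarith
    moreover have "sqrt (1 + (xseq M k)^2) \<ge> 1" by simp
    ultimately have "sqrt (1 + (xseq M k)^2) * sqrt (1 + (inverse (xseq M k))^2) \<ge> 1 * real M"
      by (intro mult_mono) auto
    then show "y k \<ge> real M - C" using bd[of k] by linarith
  next
    fix k assume "\<not> halts k"
    then show "y k \<le> 1 + C" using xseq_nhalts[of k M] bd[of k] by simp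
  qed
qed

end

theorem theorem3p3:
  assumes "CARD('m::finite) \<ge> 2" and "CARD('n::finite) \<ge> 2"
  shows
   "(\<forall>g :: complex ^ 'n ^ 'm \<Rightarrow> complex ^ 'm ^ 'n.
       (\<exists>C. \<forall>A. frob_norm A \<le> sqrt 2 \<longrightarrow> frob_norm (pinv A - g A) \<le> C)
       \<longrightarrow> \<not> BM_computable_mat_mat g)
  \<and> (\<forall>g :: complex ^ 'n ^ 'm \<Rightarrow> real.
       (\<exists>C. \<forall>A. frob_norm A \<le> sqrt 2 \<longrightarrow> \<bar>frob_norm (pinv A) - g A\<bar> \<le> C)
       \<longrightarrow> \<not> BM_computable_mat_real g)
  \<and> (\<forall>\<Psi> :: complex ^ 'n ^ 'm \<Rightarrow> complex ^ 'm \<Rightarrow> real.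
       (\<exists>c < 1/4. \<forall>A b. frob_norm A \<le> sqrt 2 \<longrightarrow> norm b \<le> sqrt 2 \<longrightarrow>
            \<bar>(INF x :: complex ^ 'n. norm (A *v x - b)) - \<Psi> A b\<bar> \<le> c)
       \<longrightarrow> \<not> BM_computable_matvec_real \<Psi>)
  \<and> (\<forall>\<Psi> :: complex ^ 'n ^ 'm \<Rightarrow> complex ^ 'm \<Rightarrow> complex ^ 'n.
       (\<exists>C. \<forall>A b. frob_norm A \<le> sqrt 2 \<longrightarrow> norm b \<le> sqrt 2 \<longrightarrow>
            norm (pinv A *v b - \<Psi> A b) \<le> C)
       \<longrightarrow> \<not> BM_computable_matvec_vec \<Psi>)
  \<and> (\<forall>\<Psi> :: complex ^ 'n ^ 'm \<Rightarrow> complex ^ 'm \<Rightarrow> real.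
       (\<exists>C. \<forall>A b. frob_norm A \<le> sqrt 2 \<longrightarrow> norm b \<le> sqrt 2 \<longrightarrow>
            \<bar>norm (pinv A *v b) - \<Psi> A b\<bar> \<le> C)
       \<longrightarrow> \<not> BM_computable_matvec_real \<Psi>)
  \<and> (\<forall>\<kappa> :: complex ^ 'n ^ 'm \<Rightarrow> real.
       (\<exists>C. \<forall>A. frob_norm A \<le> sqrt 2 \<longrightarrow> \<bar>frob_norm A * frob_norm (pinv A) - \<kappa> A\<bar> \<le> C)
       \<longrightarrow> \<not> BM_computable_mat_real \<kappa>)"
proof -
  obtain i1 i2 :: 'm where i12: "i1 \<noteq> i2" using two_elems[OF assms(1)] by blast
  obtain j1 j2 :: 'n where j12: "j1 \<noteq> j2" using two_elems[OF assms(2)] by blast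
  show ?thesis
    using part1[OF i12 j12] part2[OF i12 j12] part3[OF i12 j12] part4[OF i12 j12]
      part5[OF i12 j12] part6[OF i12 j12] by blast
qed


end
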